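(* Let $G=GL(\infty,F_2)\ltimes F_2^\infty$ and let $\mathcal M\subseteq L(G)$ be a $G$-invariant von Neumann subalgebra. Then either $L(F_2^\infty)\subseteq\mathcal M$ or $\mathcal M\cap L(F_2^\infty)=\mathbb C1$.
   Context: For a countable discrete group $G$, $L(G)$ is the group von Neumann algebra generated by the left regular unitaries $u_g$ on $\ell^2(G)$; for a subgroup $N$, $L(N)$ is the von Neumann subalgebra generated by $\{u_g:g\in N\}$. A von Neumann subalgebra $\mathcal M\subseteq L(G)$ is $G$-invariant if $u_g\mathcal M u_g^*\subseteq\mathcal M$ for all $g\in G$. $F_2$ is the field with two elements and $F_2^\infty=\bigoplus_{\mathbb N}F_2$ is the space of finitely supported column vectors, regarded as an abelian group under addition. $GL(\infty,F_2)$ is the group of invertible $\mathbb N\times\mathbb N$ matrices $M$ over $F_2$ with $M_{ij}\neq\delta_{ij}$ for only finitely many $(i,j)$, acting on $F_2^\infty$ by matrix multiplication. $G=GL(\infty,F_2)\ltimes F_2^\infty$ is the semidirect product with $gvg^{-1}=g(v)$. *)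

theory Defs
  imports "HOL-Algebra.Group" "HOL-Analysis.Infinite_Sum"
begin

text \<open>Elements of F_2 are booleans (True = 1), addition is exclusive or.
  Matrices are functions nat => nat => bool, column vectors nat => bool.\<close>

type_synonym mat2 = "nat \<Rightarrow> nat \<Rightarrow> bool"
type_synonym vec2 = "nat \<Rightarrow> bool"

definition idm :: mat2 where "idm i j \<longleftrightarrow> i = j"

definition finitary :: "mat2 \<Rightarrow> bool" where
  "finitary M \<longleftrightarrow> finite {(i, j). M i j \<noteq> (i = j)}"

definition mmul :: "mat2 \<Rightarrow> mat2 \<Rightarrow> mat2" where
  "mmul M N i j \<longleftrightarrow> odd (card {k. M i k \<and> N k j})"

definition mvec :: "mat2 \<Rightarrow> vec2 \<Rightarrow> vec2" where
  "mvec M v i \<longleftrightarrow> odd (card {k. M i k \<and> v k})"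

definition vadd :: "vec2 \<Rightarrow> vec2 \<Rightarrow> vec2" where
  "vadd v w i \<longleftrightarrow> v i \<noteq> w i"

definition GLinf :: "mat2 set" where
  "GLinf = {M. finitary M \<and> (\<exists>N. finitary N \<and> mmul M N = idm \<and> mmul N M = idm)}"

definition Finf :: "vec2 set" where
  "Finf = {v. finite {i. v i}}"

text \<open>The pair (g, v) stands for the element v g of the semidirect product
  (v in F_2^infinity, g in GL(infinity,F_2)), so that g v g^-1 = g(v) gives
  (v g)(w h) = (v + g(w)) (g h).\<close>

definition Gsd :: "(mat2 \<times> vec2) monoid" where
  "Gsd = \<lparr> carrier = GLinf \<times> Finf,
           monoid.mult = (\<lambda>(g, v) (h, w). (mmul g h, vadd v (mvec g w))),
           monoid.one = (idm, (\<lambda>_. False)) \<rparr>"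

definition Nsd :: "(mat2 \<times> vec2) set" where
  "Nsd = {(idm, v) | v. v \<in> Finf}"

definition l2 :: "'a set \<Rightarrow> ('a \<Rightarrow> complex) set" where
  "l2 X = {f. (\<forall>x. x \<notin> X \<longrightarrow> f x = 0) \<and> (\<lambda>x. (cmod (f x))\<^sup>2) summable_on UNIV}"

definition l2_inner :: "('a \<Rightarrow> complex) \<Rightarrow> ('a \<Rightarrow> complex) \<Rightarrow> complex" where
  "l2_inner f g = (\<Sum>\<^sub>\<infinity>x. f x * cnj (g x))"

definition l2_norm :: "('a \<Rightarrow> complex) \<Rightarrow> real" where
  "l2_norm f = sqrt (\<Sum>\<^sub>\<infinity>x. (cmod (f x))\<^sup>2)"

type_synonym 'a op = "('a \<Rightarrow> complex) \<Rightarrow> ('a \<Rightarrow> complex)"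

text \<open>Bounded linear operators on l^2(X); as a canonical representative an operator
  is required to send every function outside l^2(X) to 0.\<close>
definition bop :: "'a set \<Rightarrow> 'a op set" where
  "bop X = {T. (\<forall>f\<in>l2 X. T f \<in> l2 X) \<and> (\<forall>f. f \<notin> l2 X \<longrightarrow> T f = (\<lambda>_. 0))
     \<and> (\<forall>f\<in>l2 X. \<forall>g\<in>l2 X. T (\<lambda>x. f x + g x) = (\<lambda>x. T f x + T g x))
     \<and> (\<forall>f\<in>l2 X. \<forall>c. T (\<lambda>x. c * f x) = (\<lambda>x. c * T f x))
     \<and> (\<exists>C. \<forall>f\<in>l2 X. l2_norm (T f) \<le> C * l2_norm f)}"

definition idop :: "'a set \<Rightarrow> 'a op" where
  "idop X f = (if f \<in> l2 X then f else (\<lambda>_. 0))"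

definition op_add :: "'a op \<Rightarrow> 'a op \<Rightarrow> 'a op" where
  "op_add T S f = (\<lambda>x. T f x + S f x)"

definition op_scale :: "complex \<Rightarrow> 'a op \<Rightarrow> 'a op" where
  "op_scale c T f = (\<lambda>x. c * T f x)"

definition is_adjoint :: "'a set \<Rightarrow> 'a op \<Rightarrow> 'a op \<Rightarrow> bool" where
  "is_adjoint X T S \<longleftrightarrow> (\<forall>f\<in>l2 X. \<forall>g\<in>l2 X. l2_inner (T f) g = l2_inner f (S g))"

definition wot_closed :: "'a set \<Rightarrow> 'a op set \<Rightarrow> bool" where
  "wot_closed X M \<longleftrightarrow>
     (\<forall>T\<in>bop X.
        (\<forall>F. finite F \<longrightarrow> F \<subseteq> l2 X \<times> l2 X \<longrightarrow> (\<forall>\<epsilon>>0. \<exists>S\<in>M.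
            \<forall>(f, g)\<in>F. cmod (l2_inner (\<lambda>x. T f x - S f x) g) < \<epsilon>))
        \<longrightarrow> T \<in> M)"

definition vNa :: "'a set \<Rightarrow> 'a op set \<Rightarrow> bool" where
  "vNa X M \<longleftrightarrow> M \<subseteq> bop X \<and> idop X \<in> M
     \<and> (\<forall>T\<in>M. \<forall>S\<in>M. op_add T S \<in> M)
     \<and> (\<forall>T\<in>M. \<forall>c. op_scale c T \<in> M)
     \<and> (\<forall>T\<in>M. \<forall>S\<in>M. T \<circ> S \<in> M)
     \<and> (\<forall>T\<in>M. \<exists>S\<in>M. is_adjoint X T S)
     \<and> wot_closed X M"

definition vN_gen :: "'a set \<Rightarrow> 'a op set \<Rightarrow> 'a op set" where
  "vN_gen X S = \<Inter>{M. vNa X M \<and> S \<subseteq> M}"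

definition lreg :: "('g, 'b) monoid_scheme \<Rightarrow> 'g \<Rightarrow> 'g op" where
  "lreg G g f = (if f \<in> l2 (carrier G)
      then (\<lambda>h. if h \<in> carrier G then f (inv\<^bsub>G\<^esub> g \<otimes>\<^bsub>G\<^esub> h) else 0) else (\<lambda>_. 0))"

text \<open>L(N) inside B(l^2(G)) for a subgroup N of G; L(G) is groupVN G (carrier G).\<close>
definition groupVN :: "('g, 'b) monoid_scheme \<Rightarrow> 'g set \<Rightarrow> 'g op set" where
  "groupVN G N = vN_gen (carrier G) (lreg G ` N)"

definition G_invariant :: "('g, 'b) monoid_scheme \<Rightarrow> 'g op set \<Rightarrow> bool" where
  "G_invariant G M \<longleftrightarrow> (\<forall>g\<in>carrier G. \<forall>T\<in>M. \<forall>S\<in>bop (carrier G).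
      is_adjoint (carrier G) (lreg G g) S \<longrightarrow> lreg G g \<circ> T \<circ> S \<in> M)"

definition scalars :: "'a set \<Rightarrow> 'a op set" where
  "scalars X = range (\<lambda>c. op_scale c (idop X))"

end

theory Submission
  imports Defs "HOL-Analysis.Convex" "HOL-Analysis.Elementary_Normed_Spaces"
begin

definition ip :: "vec2 \<Rightarrow> vec2 \<Rightarrow> bool" where
  "ip p u \<longleftrightarrow> odd (card {k. p k \<and> u k})"

lemma mvec_ip: "mvec M u i = ip (M i) u"
  by (simp add: mvec_def ip_def)

lemma mmul_mvec: "mmul M N i j = mvec M (\<lambda>k. N k j) i"
  by (simp add: mmul_def mvec_def)

lemma card_symdiff_parity:
  assumes "finite A" "finite B"
  shows "odd (card {k. (k \<in> A) \<noteq> (k \<in> B)}) \<longleftrightarrow> (odd (card A) \<noteq> odd (card B))"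
proof -
  have e: "{k. (k \<in> A) \<noteq> (k \<in> B)} = (A - B) \<union> (B - A)" by auto
  have c1: "card ((A - B) \<union> (B - A)) = card (A - B) + card (B - A)"
    by (rule card_Un_disjoint) (use assms in auto)
  have c2: "card A = card (A - B) + card (A \<inter> B)"
  proof -
    have "A = (A - B) \<union> (A \<inter> B)" by auto
    then have "card A = card ((A - B) \<union> (A \<inter> B))" by simp
    also have "\<dots> = card (A - B) + card (A \<inter> B)"
      by (rule card_Un_disjoint) (use assms in auto)
    finally show ?thesis .
  qed
  have c3: "card B = card (B - A) + card (A \<inter> B)"
  proof -
    have "B = (B - A) \<union> (A \<inter> B)" by auto
    then have "card B = card ((B - A) \<union> (A \<inter> B))" by simp
    also have "\<dots> = card (B - A) + card (A \<inter> B)"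
      by (rule card_Un_disjoint) (use assms in auto)
    finally show ?thesis .
  qed
  show ?thesis unfolding e c1 using c2 c3 by presburger
qed

lemma ip_xor:
  assumes "finite {k. P k}" "finite {k. Q k}"
  shows "ip (\<lambda>k. P k \<noteq> Q k) u = (ip P u \<noteq> ip Q u)"
proof -
  have "{k. (P k \<noteq> Q k) \<and> u k} = {k. (k \<in> {k. P k \<and> u k}) \<noteq> (k \<in> {k. Q k \<and> u k})}" by auto
  moreover have "finite {k. P k \<and> u k}" "finite {k. Q k \<and> u k}"
    using assms by (auto intro: finite_subset)
  ultimately show ?thesis unfolding ip_def using card_symdiff_parity[of "{k. P k \<and> u k}" "{k. Q k \<and> u k}"]
    by simp
qed

lemma ip_xor2:
  assumes "finite {k. p k}"
  shows "ip p (\<lambda>k. u k \<noteq> w k) = (ip p u \<noteq> ip p w)"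
proof -
  have "{k. p k \<and> (u k \<noteq> w k)} = {k. (k \<in> {k. p k \<and> u k}) \<noteq> (k \<in> {k. p k \<and> w k})}" by auto
  moreover have "finite {k. p k \<and> u k}" "finite {k. p k \<and> w k}"
    using assms by (auto intro: finite_subset)
  ultimately show ?thesis unfolding ip_def using card_symdiff_parity[of "{k. p k \<and> u k}" "{k. p k \<and> w k}"]
    by simp
qed

lemma ip_single[simp]: "ip (\<lambda>k. k = t) u = u t"
proof -
  have "{k. k = t \<and> u k} = (if u t then {t} else {})" by auto
  then show ?thesis by (simp add: ip_def)
qed

lemma ip_single'[simp]: "ip (\<lambda>k. t = k) u = u t"
  using ip_single[of t u] by (simp add: eq_commute)

lemma ip_False[simp]: "ip (\<lambda>k. False) u = False"
  by (simp add: ip_def)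

lemma ip_and_const: "ip p (\<lambda>k. a k \<and> s) = (s \<and> ip p a)"
  by (cases s) (simp_all add: ip_def)

lemma ip_zero[simp]: "ip p (\<lambda>k. False) = False"
  by (simp add: ip_def)

definition rowfin :: "mat2 \<Rightarrow> bool" where
  "rowfin M \<longleftrightarrow> (\<forall>i. finite {k. M i k})"

definition bnd :: "mat2 \<Rightarrow> nat \<Rightarrow> bool" where
  "bnd M n \<longleftrightarrow> (\<forall>i j. M i j \<noteq> (i = j) \<longrightarrow> i < n \<and> j < n)"

lemma finitary_bnd: "finitary M \<longleftrightarrow> (\<exists>n. bnd M n)"
proof
  assume "finitary M"
  then have f: "finite {(i, j). M i j \<noteq> (i = j)}" by (simp add: finitary_def)
  let ?S = "fst ` {(i, j). M i j \<noteq> (i = j)} \<union> snd ` {(i, j). M i j \<noteq> (i = j)}"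
  have "finite ?S" using f by (simp add: finite_imageI)
  then have "\<exists>m. \<forall>x\<in>?S. x < m" by (simp only: finite_nat_set_iff_bounded)
  then obtain n where n0: "\<forall>x\<in>?S. x < n" by (elim exE)
  have n: "x < n" if "x \<in> ?S" for x using n0 that by (rule bspec)
  have "bnd M n" unfolding bnd_def
  proof (intro allI impI)
    fix i j assume "M i j \<noteq> (i = j)"
    then have "(i, j) \<in> {(i, j). M i j \<noteq> (i = j)}" by simp
    then have "fst (i, j) \<in> ?S" "snd (i, j) \<in> ?S" by (rule UnI1[OF imageI], rule UnI2[OF imageI])
    then have "i \<in> ?S" "j \<in> ?S" by simp_all
    then show "i < n \<and> j < n" using n by blast
  qed
  then show "\<exists>n. bnd M n" by blast
next
  assume "\<exists>n. bnd M n"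
  then obtain n where "bnd M n" by blast
  have "{(i, j). M i j \<noteq> (i = j)} \<subseteq> {..<n} \<times> {..<n}"
  proof (rule subsetI)
    fix p assume "p \<in> {(i, j). M i j \<noteq> (i = j)}"
    then have "M (fst p) (snd p) \<noteq> (fst p = snd p)" by (simp add: case_prod_beta)
    then have "fst p < n \<and> snd p < n" using \<open>bnd M n\<close> unfolding bnd_def by blast
    then show "p \<in> {..<n} \<times> {..<n}" by (simp add: mem_Times_iff)
  qed
  moreover have "finite ({..<n} \<times> {..<n})" by simp
  ultimately show "finitary M" unfolding finitary_def
    by (rule finite_subset)
qed

lemma bnd_row: assumes "bnd M n" "i \<ge> n" shows "M i k = (k = i)"
proof (rule ccontr)
  assume "M i k \<noteq> (k = i)"
  then have "M i k \<noteq> (i = k)" by auto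
  then have "i < n" using assms(1) unfolding bnd_def by blast
  then show False using assms(2) by simp
qed

lemma bnd_col: assumes "bnd M n" "j \<ge> n" shows "M k j = (k = j)"
proof (rule ccontr)
  assume "M k j \<noteq> (k = j)"
  then have "j < n" using assms(1) unfolding bnd_def by blast
  then show False using assms(2) by simp
qed

lemma bnd_mono: "bnd M n \<Longrightarrow> n \<le> m \<Longrightarrow> bnd M m"
  unfolding bnd_def by force

lemma finitary_rowfin: assumes "finitary M" shows "rowfin M"
proof -
  obtain n where b: "bnd M n" using assms finitary_bnd by blast
  have "{k. M i k} \<subseteq> insert i {..<n}" for i
  proof
    fix k assume k: "k \<in> {k. M i k}"
    show "k \<in> insert i {..<n}"
    proof (cases "k < n")
      case False
      then have "M i k = (i = k)" using bnd_col[OF b, of k i] by simp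
      then show ?thesis using k by simp
    qed simp
  qed
  moreover have "finite (insert i {..<n})" for i by simp
  ultimately show ?thesis unfolding rowfin_def using finite_subset by blast
qed

lemma parity_fiber:
  assumes "finite P"
  shows "odd (card P) \<longleftrightarrow> odd (card {k. odd (card {m. (k, m) \<in> P})})"
proof -
  let ?K = "fst ` P"
  have fin: "finite ?K" using assms by auto
  have finB: "\<forall>a\<in>?K. finite {m. (a, m) \<in> P}"
  proof
    fix a assume "a \<in> ?K"
    have "{m. (a, m) \<in> P} \<subseteq> snd ` P" by force
    then show "finite {m. (a, m) \<in> P}" using assms by (meson finite_imageI finite_subset)
  qed
  have "P = Sigma ?K (\<lambda>a. {m. (a, m) \<in> P})" by force
  then have "card P = (\<Sum>a\<in>?K. card {m. (a, m) \<in> P})"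
    using card_SigmaI[OF fin finB] by simp
  moreover have "{k. odd (card {m. (k, m) \<in> P})} = {a\<in>?K. odd (card {m. (a, m) \<in> P})}"
  proof -
    have "x \<in> ?K" if "odd (card {m. (x, m) \<in> P})" for x
    proof -
      have "{m. (x, m) \<in> P} \<noteq> {}" using that by (intro notI) simp
      then obtain m where "(x, m) \<in> P" by blast
      then show ?thesis by (rule image_eqI[rotated]) simp
    qed
    then show ?thesis by blast
  qed
  ultimately show ?thesis by (simp add: even_sum_iff[OF fin])
qed

lemma mvec_mvec:
  assumes "rowfin g" "rowfin h"
  shows "mvec g (mvec h u) = mvec (mmul g h) u"
proof
  fix i
  let ?P = "{(k, m). g i k \<and> h k m \<and> u m}"
  have sub: "?P \<subseteq> Sigma {k. g i k} (\<lambda>k. {m. h k m})" by auto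
  have finP: "finite ?P"
    by (rule finite_subset[OF sub]) (use assms in \<open>auto simp: rowfin_def\<close>)
  have l: "mvec g (mvec h u) i \<longleftrightarrow> odd (card ?P)"
  proof -
    have "{m. (k, m) \<in> ?P} = (if g i k then {m. h k m \<and> u m} else {})" for k by auto
    then have "{k. odd (card {m. (k, m) \<in> ?P})} = {k. g i k \<and> mvec h u k}"
      by (auto simp: mvec_def)
    then show ?thesis using parity_fiber[OF finP] by (simp add: mvec_def)
  qed
  let ?Q = "{(m, k). g i k \<and> h k m \<and> u m}"
  have "?Q = (\<lambda>(k, m). (m, k)) ` ?P" by auto
  then have cq: "card ?Q = card ?P"
    by (simp add: card_image inj_on_def)
  have finQ: "finite ?Q" using finP \<open>?Q = _\<close> by simp
  have r: "mvec (mmul g h) u i \<longleftrightarrow> odd (card ?Q)"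
  proof -
    have "{k. (m, k) \<in> ?Q} = (if u m then {k. g i k \<and> h k m} else {})" for m by auto
    then have "{m. odd (card {k. (m, k) \<in> ?Q})} = {m. mmul g h i m \<and> u m}"
      by (auto simp: mmul_def)
    then show ?thesis using parity_fiber[OF finQ] by (simp add: mvec_def)
  qed
  show "mvec g (mvec h u) i = mvec (mmul g h) u i" using l r cq by simp
qed

lemma mmul_assoc:
  assumes "rowfin g" "rowfin h"
  shows "mmul (mmul g h) l = mmul g (mmul h l)"
proof (intro ext)
  fix i j
  have "mmul (mmul g h) l i j = mvec (mmul g h) (\<lambda>k. l k j) i" by (simp add: mmul_mvec)
  also have "\<dots> = mvec g (mvec h (\<lambda>k. l k j)) i" using mvec_mvec[OF assms] by simp
  also have "\<dots> = mmul g (mmul h l) i j" by (simp add: mmul_mvec mvec_def)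
  finally show "mmul (mmul g h) l i j = mmul g (mmul h l) i j" .
qed

lemma ip_single_right: "ip p (\<lambda>k. k = j) = p j"
proof -
  have "{k. p k \<and> k = j} = (if p j then {j} else {})" by auto
  then show ?thesis by (simp add: ip_def)
qed

lemma idm_row: "idm i = (\<lambda>k. i = k)"
  by (rule ext) (simp add: idm_def)

lemma idm_col: "(\<lambda>k. idm k j) = (\<lambda>k. k = j)"
  by (rule ext) (simp add: idm_def)

lemma vadd_fun: "vadd u w = (\<lambda>i. u i \<noteq> w i)"
  by (rule ext) (simp add: vadd_def)

lemma bnd_row_fun: "bnd M n \<Longrightarrow> n \<le> i \<Longrightarrow> M i = (\<lambda>k. k = i)"
  by (rule ext) (rule bnd_row)

lemma GLinf_finitary: "g \<in> GLinf \<Longrightarrow> finitary g"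
  by (simp add: GLinf_def)

lemma mvec_idm[simp]: "mvec idm u = u"
  by (rule ext) (simp add: mvec_ip idm_row)

lemma mmul_idm_left[simp]: "mmul idm M = M"
  by (intro ext) (simp add: mmul_mvec)

lemma mmul_idm_right[simp]: "mmul M idm = M"
  by (intro ext) (simp add: mmul_mvec mvec_ip idm_col ip_single_right)

lemma mvec_zero[simp]: "mvec M (\<lambda>_. False) = (\<lambda>_. False)"
  by (rule ext) (simp add: mvec_ip)

lemma mvec_vadd:
  assumes "rowfin M" shows "mvec M (vadd u w) = vadd (mvec M u) (mvec M w)"
  using assms unfolding rowfin_def by (intro ext) (simp only: mvec_ip vadd_fun, rule ip_xor2, blast)

lemma vadd_zero_left[simp]: "vadd (\<lambda>_. False) u = u"
  by (simp add: vadd_fun)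
lemma vadd_zero_right[simp]: "vadd u (\<lambda>_. False) = u"
  by (simp add: vadd_fun)
lemma vadd_self[simp]: "vadd u u = (\<lambda>_. False)"
  by (simp add: vadd_fun)
lemma vadd_assoc: "vadd (vadd u v) w = vadd u (vadd v w)"
  unfolding vadd_fun by (rule ext) blast

lemma bnd_mmul: "bnd g n \<Longrightarrow> bnd h n \<Longrightarrow> bnd (mmul g h) n"
proof -
  assume g: "bnd g n" and h: "bnd h n"
  have "mmul g h i j = (i = j)" if "\<not> (i < n \<and> j < n)" for i j
  proof (cases "i < n")
    case False
    then have "mmul g h i j = mvec g (\<lambda>k. h k j) i" by (simp add: mmul_mvec)
    also have "\<dots> = h i j" using bnd_row_fun[OF g, of i] False by (simp add: mvec_ip)
    finally show ?thesis using bnd_row[OF h, of i j] False by (simp add: eq_commute)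
  next
    case True
    then have jn: "j \<ge> n" using that by simp
    have "mmul g h i j = ip (g i) (\<lambda>k. k = j)" by (simp add: mmul_mvec mvec_ip bnd_col[OF h jn])
    also have "\<dots> = g i j" by (rule ip_single_right)
    finally show ?thesis using bnd_col[OF g jn] by simp
  qed
  then show ?thesis unfolding bnd_def by blast
qed

lemma finitary_mmul: "finitary g \<Longrightarrow> finitary h \<Longrightarrow> finitary (mmul g h)"
  unfolding finitary_bnd by (metis bnd_mmul bnd_mono max.cobounded1 max.cobounded2)

lemma Finf_mvec:
  assumes "finitary g" "u \<in> Finf" shows "mvec g u \<in> Finf"
proof -
  obtain n where b: "bnd g n" using assms finitary_bnd by blast
  have "{i. mvec g u i} \<subseteq> {..<n} \<union> {i. u i}"
  proof
    fix i assume "i \<in> {i. mvec g u i}"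
    then show "i \<in> {..<n} \<union> {i. u i}"
      using bnd_row_fun[OF b, of i] by (cases "i < n") (simp_all add: mvec_ip)
  qed
  moreover have "finite ({..<n} \<union> {i. u i})" using assms by (simp add: Finf_def)
  ultimately have "finite {i. mvec g u i}" by (rule finite_subset)
  then show ?thesis by (simp add: Finf_def)
qed

lemma Finf_vadd: assumes "u \<in> Finf" "w \<in> Finf" shows "vadd u w \<in> Finf"
proof -
  have "{i. vadd u w i} \<subseteq> {i. u i} \<union> {i. w i}" by (auto simp: vadd_def)
  moreover have "finite ({i. u i} \<union> {i. w i})" using assms by (simp add: Finf_def)
  ultimately have "finite {i. vadd u w i}" by (rule finite_subset)
  then show ?thesis by (simp add: Finf_def)
qed

lemma GLinf_mmul: "g \<in> GLinf \<Longrightarrow> h \<in> GLinf \<Longrightarrow> mmul g h \<in> GLinf"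
proof -
  assume g: "g \<in> GLinf" and h: "h \<in> GLinf"
  then obtain G H where G: "finitary G" "mmul g G = idm" "mmul G g = idm"
    and H: "finitary H" "mmul h H = idm" "mmul H h = idm" unfolding GLinf_def by blast
  have rf: "rowfin g" "rowfin h" "rowfin G" "rowfin H" using g h G H finitary_rowfin
    unfolding GLinf_def by auto
  have "mmul (mmul g h) (mmul H G) = idm"
    using rf by (simp add: mmul_assoc finitary_rowfin H G flip: mmul_assoc[of h H G])
  moreover have "mmul (mmul H G) (mmul g h) = idm"
    using rf by (simp add: mmul_assoc finitary_rowfin H G flip: mmul_assoc[of G g h])
  ultimately show ?thesis using g h G H finitary_mmul unfolding GLinf_def by blast
qed

lemma idm_GLinf: "idm \<in> GLinf"
proof -
  have "finitary idm" unfolding finitary_def idm_def by simp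
  then show ?thesis unfolding GLinf_def by auto
qed

lemma Gsd_mult: "(g, v) \<otimes>\<^bsub>Gsd\<^esub> (h, w) = (mmul g h, vadd v (mvec g w))"
  by (simp add: Gsd_def)

lemma Gsd_one: "\<one>\<^bsub>Gsd\<^esub> = (idm, (\<lambda>_. False))"
  by (simp add: Gsd_def)

lemma Gsd_carrier: "carrier Gsd = GLinf \<times> Finf"
  by (simp add: Gsd_def)

lemma GLinf_rowfin: "g \<in> GLinf \<Longrightarrow> rowfin g"
  unfolding GLinf_def using finitary_rowfin by blast

lemma group_Gsd: "group Gsd"
proof (rule groupI)
  fix x y assume "x \<in> carrier Gsd" "y \<in> carrier Gsd"
  then show "x \<otimes>\<^bsub>Gsd\<^esub> y \<in> carrier Gsd"
    by (cases x, cases y) (auto simp: Gsd_mult Gsd_carrier GLinf_mmul Finf_vadd Finf_mvec GLinf_finitary)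
next
  show "\<one>\<^bsub>Gsd\<^esub> \<in> carrier Gsd"
    by (simp add: Gsd_one Gsd_carrier idm_GLinf Finf_def)
next
  fix x y z assume "x \<in> carrier Gsd" "y \<in> carrier Gsd" "z \<in> carrier Gsd"
  then show "x \<otimes>\<^bsub>Gsd\<^esub> y \<otimes>\<^bsub>Gsd\<^esub> z = x \<otimes>\<^bsub>Gsd\<^esub> (y \<otimes>\<^bsub>Gsd\<^esub> z)"
    by (cases x, cases y, cases z)
      (auto simp: Gsd_mult Gsd_carrier mmul_assoc GLinf_rowfin mvec_vadd vadd_assoc mvec_mvec)
next
  fix x assume "x \<in> carrier Gsd"
  then show "\<one>\<^bsub>Gsd\<^esub> \<otimes>\<^bsub>Gsd\<^esub> x = x"
    by (cases x) (simp add: Gsd_mult Gsd_one)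
next
  fix x assume x: "x \<in> carrier Gsd"
  obtain g v where xe: "x = (g, v)" by (cases x)
  with x have g: "g \<in> GLinf" and v: "v \<in> Finf" by (auto simp: Gsd_carrier)
  then obtain N where N: "finitary N" "mmul g N = idm" "mmul N g = idm" unfolding GLinf_def by blast
  have NG: "N \<in> GLinf" using N g unfolding GLinf_def by blast
  have "(N, mvec N v) \<otimes>\<^bsub>Gsd\<^esub> x = \<one>\<^bsub>Gsd\<^esub>"
    using N by (simp add: xe Gsd_mult Gsd_one)
  moreover have "(N, mvec N v) \<in> carrier Gsd" using NG v N Finf_mvec by (simp add: Gsd_carrier)
  ultimately show "\<exists>y\<in>carrier Gsd. y \<otimes>\<^bsub>Gsd\<^esub> x = \<one>\<^bsub>Gsd\<^esub>" by blast
qed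


definition gblk :: "vec2 \<Rightarrow> nat \<Rightarrow> nat \<Rightarrow> nat \<Rightarrow> mat2" where
  "gblk v r D s i j = (if D + s * D \<le> i \<and> i < D + s * D + D then
      ((i = j) \<noteq> ((j = i - (D + s * D)) \<noteq> (j = r \<and> v (i - (D + s * D))))) else (i = j))"

lemma xor_cancel: "((a \<noteq> b) \<noteq> b) = (a::bool)"
  by (cases a; cases b) simp_all

lemma xor_cancel2: "(a \<noteq> (a \<noteq> b)) = (b::bool)"
  by (cases a; cases b) simp_all

lemma fin_single: "finite {j. i = j}" by simp

lemma fin_xor_tr: "finite {j. (j = t) \<noteq> (j = r \<and> b)}"
proof -
  have "{j. (j = t) \<noteq> (j = r \<and> b)} \<subseteq> {t, r}" by auto
  then show ?thesis by (rule finite_subset) simp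
qed

lemma ip_tr: "ip (\<lambda>j. (j = t) \<noteq> (j = r \<and> b)) u = (u t \<noteq> (u r \<and> b))"
proof -
  have "ip (\<lambda>j. (j = t) \<noteq> (j = r \<and> b)) u = (ip (\<lambda>j. j = t) u \<noteq> ip (\<lambda>j. j = r \<and> b) u)"
    by (rule ip_xor) (simp_all add: finite_subset[of "{j. j = r \<and> b}" "{r}"])
  also have "ip (\<lambda>j. j = r \<and> b) u = (u r \<and> b)"
    by (cases b) simp_all
  finally show ?thesis by simp
qed

lemma mvec_gblk:
  "mvec (gblk v r D s) u i =
    (if D + s * D \<le> i \<and> i < D + s * D + D
     then (u i \<noteq> (u (i - (D + s * D)) \<noteq> (u r \<and> v (i - (D + s * D))))) else u i)"
proof (cases "D + s * D \<le> i \<and> i < D + s * D + D")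
  case True
  let ?t = "i - (D + s * D)"
  have row: "gblk v r D s i = (\<lambda>j. (i = j) \<noteq> ((j = ?t) \<noteq> (j = r \<and> v ?t)))"
    by (rule ext) (simp only: gblk_def if_P[OF True])
  have "mvec (gblk v r D s) u i = (ip (\<lambda>j. i = j) u \<noteq> ip (\<lambda>j. (j = ?t) \<noteq> (j = r \<and> v ?t)) u)"
    unfolding mvec_ip row by (rule ip_xor[OF fin_single fin_xor_tr])
  then show ?thesis unfolding if_P[OF True] by (simp only: ip_tr ip_single')
next
  case False
  have row: "gblk v r D s i = (\<lambda>j. i = j)"
    by (rule ext) (simp only: gblk_def if_not_P[OF False] if_False)
  show ?thesis unfolding if_not_P[OF False] unfolding mvec_ip row by simp
qed

lemma gblk_bnd: assumes "r < D" shows "bnd (gblk v r D s) (D + s * D + D)"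
  unfolding bnd_def
proof (intro allI impI)
  fix i j assume a: "gblk v r D s i j \<noteq> (i = j)"
  have blk: "D + s * D \<le> i \<and> i < D + s * D + D"
  proof (rule ccontr)
    assume "\<not> ?thesis"
    then have "gblk v r D s i j = (i = j)" by (simp only: gblk_def if_not_P if_False)
    then show False using a by simp
  qed
  have "gblk v r D s i j = ((i = j) \<noteq> ((j = i - (D + s * D)) \<noteq> (j = r \<and> v (i - (D + s * D)))))"
    by (simp only: gblk_def if_P[OF blk])
  then have x: "(j = i - (D + s * D)) \<noteq> (j = r \<and> v (i - (D + s * D)))" using a by auto
  have "j = i - (D + s * D) \<or> j = r" using x by auto
  then have "j < D" using blk assms by auto
  then show "i < D + s * D + D \<and> j < D + s * D + D" using blk by simp
qed

lemma gblk_invol: assumes r: "r < D"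
  shows "mvec (gblk v r D s) (mvec (gblk v r D s) u) = u"
proof (rule ext)
  fix i
  let ?g = "gblk v r D s"
  have lowD: "mvec ?g u t = u t" if "t < D" for t
    using that by (simp add: mvec_gblk)
  show "mvec ?g (mvec ?g u) i = u i"
  proof (cases "D + s * D \<le> i \<and> i < D + s * D + D")
    case True
    let ?t = "i - (D + s * D)"
    have t: "?t < D" using True by arith
    have "mvec ?g (mvec ?g u) i = (mvec ?g u i \<noteq> (mvec ?g u ?t \<noteq> (mvec ?g u r \<and> v ?t)))"
      using True by (simp add: mvec_gblk[of v r D s "mvec ?g u"])
    also have "\<dots> = (mvec ?g u i \<noteq> (u ?t \<noteq> (u r \<and> v ?t)))" using lowD[OF t] lowD[OF r] by simp
    also have "mvec ?g u i = (u i \<noteq> (u ?t \<noteq> (u r \<and> v ?t)))" using True by (simp add: mvec_gblk)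
    finally show ?thesis by (simp only: xor_cancel)
  next
    case False
    have "mvec ?g w i = w i" for w by (simp only: mvec_gblk if_not_P[OF False])
    then show ?thesis by simp
  qed
qed

lemma mvec_unit: "mvec M (\<lambda>k. k = j) i = M i j"
  by (simp add: mvec_ip ip_single_right)

lemma invol_mmul:
  assumes "\<And>u. mvec g (mvec g u) = u"
  shows "mmul g g = idm"
proof (intro ext)
  fix i j
  have "(\<lambda>k. g k j) = mvec g (\<lambda>k. k = j)" by (rule ext) (simp add: mvec_unit)
  then have "mmul g g i j = mvec g (mvec g (\<lambda>k. k = j)) i" by (simp add: mmul_mvec)
  also have "\<dots> = (i = j)" using assms by simp
  finally show "mmul g g i j = idm i j" by (simp add: idm_def)
qed

lemma invol_GLinf:
  assumes "finitary g" "mmul g g = idm" shows "g \<in> GLinf"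
  using assms unfolding GLinf_def by blast

lemma gblk_GLinf: assumes "r < D" shows "gblk v r D s \<in> GLinf" "mmul (gblk v r D s) (gblk v r D s) = idm"
proof -
  show m: "mmul (gblk v r D s) (gblk v r D s) = idm" by (rule invol_mmul) (rule gblk_invol[OF assms])
  have "finitary (gblk v r D s)" unfolding finitary_bnd using gblk_bnd[OF assms] by blast
  then show "gblk v r D s \<in> GLinf" using m by (rule invol_GLinf)
qed

lemma gblk_fix: assumes "v r" shows "mvec (gblk v r D s) v = v"
  by (rule ext) (simp add: mvec_gblk assms)

lemma and_True': "(x \<and> True) = x" by simp

lemma blk_unique:
  fixes D s s' i :: nat
  assumes "D + s * D \<le> i" "i < D + s * D + D" "D + s' * D \<le> i" "i < D + s' * D + D"
  shows "s = s'"
proof (rule ccontr)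
  assume ne: "s \<noteq> s'"
  show False
  proof (cases "s < s'")
    case True
    then have "Suc s * D \<le> s' * D" by (intro mult_le_mono1) simp
    then have "s * D + D \<le> s' * D" by simp
    then show False using assms by linarith
  next
    case False
    then have "s' < s" using ne by simp
    then have "Suc s' * D \<le> s * D" by (intro mult_le_mono1) simp
    then have "s' * D + D \<le> s * D" by simp
    then show False using assms by linarith
  qed
qed

lemma gblk_inj:
  assumes r: "r < D" and vr: "v r" and vD: "\<And>t. t \<ge> D \<Longrightarrow> \<not> v t"
    and wD: "\<And>t. t \<ge> D \<Longrightarrow> \<not> w t" and w0: "w \<noteq> (\<lambda>_. False)" and wv: "w \<noteq> v"
  shows "inj (\<lambda>s. mvec (gblk v r D s) w)"
proof -
  obtain t where t: "t < D" "w t \<noteq> (w r \<and> v t)"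
  proof (rule ccontr)
    assume "\<not> thesis"
    then have all: "\<And>t. t < D \<Longrightarrow> w t = (w r \<and> v t)" using that by blast
    show False
    proof (cases "w r")
      case True
      have "w = v"
      proof (rule ext)
        fix t show "w t = v t" using all[of t] True wD[of t] vD[of t] by (cases "t < D") auto
      qed
      then show False using wv by simp
    next
      case False
      have "w = (\<lambda>_. False)"
      proof (rule ext)
        fix t show "w t = False" using all[of t] False wD[of t] by (cases "t < D") auto
      qed
      then show False using w0 by simp
    qed
  qed
  show ?thesis
  proof (rule injI)
    fix s s' assume eq: "mvec (gblk v r D s) w = mvec (gblk v r D s') w"
    let ?i = "D + s * D + t"
    have "mvec (gblk v r D s) w ?i = True"
      using t wD[of ?i] by (simp add: mvec_gblk)
    then have "mvec (gblk v r D s') w ?i" using eq by simp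
    moreover have "\<not> w ?i" using wD[of ?i] by simp
    ultimately have "D + s' * D \<le> ?i \<and> ?i < D + s' * D + D"
      by (simp add: mvec_gblk split: if_splits)
    moreover have "D + s * D \<le> ?i" "?i < D + s * D + D" using t by simp_all
    ultimately show "s = s'" using blk_unique by blast
  qed
qed

definition rk :: "vec2 \<Rightarrow> vec2 \<Rightarrow> mat2" where
  "rk a p i j \<longleftrightarrow> ((i = j) \<noteq> (a i \<and> p j))"

lemma mvec_rk: assumes "finite {j. p j}"
  shows "mvec (rk a p) u i = (u i \<noteq> (a i \<and> ip p u))"
proof (cases "a i")
  case True
  have "rk a p i = (\<lambda>j. (i = j) \<noteq> p j)" using True by (simp add: rk_def fun_eq_iff)
  then have "mvec (rk a p) u i = (ip (\<lambda>j. i = j) u \<noteq> ip p u)"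
    unfolding mvec_ip by (simp only: ip_xor[OF fin_single assms])
  then show ?thesis using True by simp
next
  case False
  have "rk a p i = (\<lambda>j. i = j)" using False by (simp add: rk_def fun_eq_iff)
  then show ?thesis using False by (simp add: mvec_ip)
qed

lemma rk_invol: assumes p: "finite {j. p j}" and pa: "\<not> ip p a"
  shows "mvec (rk a p) (mvec (rk a p) u) = u"
proof (rule ext)
  fix i
  let ?s = "ip p u"
  have e: "mvec (rk a p) u = (\<lambda>i. u i \<noteq> (a i \<and> ?s))" by (rule ext) (simp add: mvec_rk[OF p])
  have "ip p (\<lambda>i. u i \<noteq> (a i \<and> ?s)) = (?s \<noteq> ip p (\<lambda>i. a i \<and> ?s))"
    by (rule ip_xor2[OF p])
  also have "ip p (\<lambda>i. a i \<and> ?s) = (?s \<and> ip p a)" by (rule ip_and_const)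
  finally have ips: "ip p (mvec (rk a p) u) = ?s" using pa e by simp
  have "mvec (rk a p) (mvec (rk a p) u) i = (mvec (rk a p) u i \<noteq> (a i \<and> ip p (mvec (rk a p) u)))"
    by (rule mvec_rk[OF p])
  also have "\<dots> = ((u i \<noteq> (a i \<and> ?s)) \<noteq> (a i \<and> ?s))" unfolding ips by (simp only: e)
  finally show "mvec (rk a p) (mvec (rk a p) u) i = u i" by (cases "u i"; cases "a i \<and> ?s") simp_all
qed

lemma rk_finitary: assumes "a \<in> Finf" "p \<in> Finf" shows "finitary (rk a p)"
proof -
  have "{(i, j). rk a p i j \<noteq> (i = j)} \<subseteq> {i. a i} \<times> {j. p j}" by (auto simp: rk_def)
  moreover have "finite ({i. a i} \<times> {j. p j})" using assms by (simp add: Finf_def)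
  ultimately show ?thesis unfolding finitary_def by (rule finite_subset)
qed

lemma transitive_GL:
  assumes v: "v \<in> Finf" "v \<noteq> (\<lambda>_. False)" and w: "w \<in> Finf" "w \<noteq> (\<lambda>_. False)"
  shows "\<exists>g\<in>GLinf. mmul g g = idm \<and> mvec g v = w"
proof -
  obtain r where r: "v r" using v(2) by auto
  obtain s where s: "w s" using w(2) by auto
  define p where "p = (if w r then (\<lambda>j. j = r) else if v s then (\<lambda>j. j = s) else (\<lambda>j. j = r \<or> j = s))"
  have rs: "\<not> w r \<Longrightarrow> r \<noteq> s" using s by auto
  have pv: "ip p v" and pw: "ip p w"
  proof -
    have ip2: "ip (\<lambda>j. j = r \<or> j = s) u = (u r \<noteq> u s)" if "r \<noteq> s" for u
    proof -
      have e: "(\<lambda>j. j = r \<or> j = s) = (\<lambda>j. (j = r) \<noteq> (j = s))" using that by (auto simp: fun_eq_iff)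
      have "ip (\<lambda>j. (j = r) \<noteq> (j = s)) u = (ip (\<lambda>j. j = r) u \<noteq> ip (\<lambda>j. j = s) u)"
        by (rule ip_xor) simp_all
      then show ?thesis unfolding e by (simp only: ip_single)
    qed
    show "ip p v" using r s rs ip2 by (auto simp: p_def)
    show "ip p w" using r s rs ip2 by (auto simp: p_def)
  qed
  have pf: "finite {j. p j}"
    by (rule finite_subset[of _ "{r, s}"]) (auto simp: p_def split: if_splits)
  define a where "a = vadd v w"
  have pa: "\<not> ip p a" unfolding a_def vadd_fun using ip_xor2[OF pf] pv pw by simp
  have aF: "a \<in> Finf" unfolding a_def by (rule Finf_vadd[OF v(1) w(1)])
  have pF: "p \<in> Finf" using pf by (simp add: Finf_def)
  have inv: "mmul (rk a p) (rk a p) = idm" by (rule invol_mmul) (rule rk_invol[OF pf pa])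
  have gl: "rk a p \<in> GLinf" by (rule invol_GLinf[OF rk_finitary[OF aF pF] inv])
  have "mvec (rk a p) v = w"
    by (rule ext) (simp only: mvec_rk[OF pf] pv and_True' a_def vadd_def xor_cancel2)
  then show ?thesis using gl inv by blast
qed


definition sq :: "('a \<Rightarrow> complex) \<Rightarrow> 'a \<Rightarrow> real" where
  "sq f = (\<lambda>x. (cmod (f x))\<^sup>2)"

lemma l2_iff: "f \<in> l2 X \<longleftrightarrow> (\<forall>x. x \<notin> X \<longrightarrow> f x = 0) \<and> sq f summable_on UNIV"
  by (simp add: l2_def sq_def)

lemma l2_out: "f \<in> l2 X \<Longrightarrow> x \<notin> X \<Longrightarrow> f x = 0"
  by (simp add: l2_def)

lemma l2_sq: "f \<in> l2 X \<Longrightarrow> sq f summable_on A"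
proof -
  assume "f \<in> l2 X"
  then have "sq f summable_on UNIV" by (simp add: l2_iff)
  then show ?thesis using summable_on_subset[of "sq f" UNIV A] by simp
qed

lemma sq_nonneg: "0 \<le> sq f x" by (simp add: sq_def)

lemma l2_zero: "(\<lambda>_. 0) \<in> l2 X"
  by (simp add: l2_def)

lemma sq_add_le: "sq (\<lambda>x. f x + g x) x \<le> 2 * sq f x + 2 * sq g x"
proof -
  have "cmod (f x + g x) \<le> cmod (f x) + cmod (g x)" by (rule norm_triangle_ineq)
  then have "(cmod (f x + g x))\<^sup>2 \<le> (cmod (f x) + cmod (g x))\<^sup>2"
    by (simp add: power_mono)
  also have "\<dots> \<le> 2 * (cmod (f x))\<^sup>2 + 2 * (cmod (g x))\<^sup>2"
    using sum_squares_bound[of "cmod (f x)" "cmod (g x)"] by (simp add: power2_sum)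
  finally show ?thesis by (simp add: sq_def)
qed

lemma l2_add: assumes "f \<in> l2 X" "g \<in> l2 X" shows "(\<lambda>x. f x + g x) \<in> l2 X"
proof -
  have "(\<lambda>x. 2 * sq f x + 2 * sq g x) summable_on UNIV"
    using assms by (intro summable_on_add summable_on_cmult_right) (simp_all add: l2_sq)
  then have "sq (\<lambda>x. f x + g x) summable_on UNIV"
    by (rule summable_on_comparison_test) (simp_all add: sq_add_le sq_nonneg)
  then show ?thesis using assms by (simp add: l2_iff)
qed

lemma sq_scale: "sq (\<lambda>x. c * f x) = (\<lambda>x. (cmod c)\<^sup>2 * sq f x)"
  by (rule ext) (simp add: sq_def norm_mult power_mult_distrib)

lemma l2_scale: assumes "f \<in> l2 X" shows "(\<lambda>x. c * f x) \<in> l2 X"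
  using assms by (simp add: l2_iff sq_scale summable_on_cmult_right)

lemma l2_minus: assumes "f \<in> l2 X" shows "(\<lambda>x. - f x) \<in> l2 X"
  using l2_scale[OF assms, of "-1"] by simp

lemma l2_diff: assumes "f \<in> l2 X" "g \<in> l2 X" shows "(\<lambda>x. f x - g x) \<in> l2 X"
  using l2_add[OF assms(1) l2_minus[OF assms(2)]] by simp

lemma prod_le_sq: "cmod (f x * cnj (g x)) \<le> (sq f x + sq g x) / 2"
proof -
  have "2 * (cmod (f x) * cmod (g x)) \<le> (cmod (f x))\<^sup>2 + (cmod (g x))\<^sup>2"
    using sum_squares_bound[of "cmod (f x)" "cmod (g x)"] by simp
  then show ?thesis by (simp add: sq_def norm_mult)
qed

lemma l2_prod_abs: assumes "f \<in> l2 X" "g \<in> l2 X"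
  shows "(\<lambda>x. f x * cnj (g x)) abs_summable_on A"
proof (rule abs_summable_on_comparison_test')
  have "(\<lambda>x. sq f x + sq g x) summable_on A"
    using assms by (intro summable_on_add) (simp_all add: l2_sq)
  then have "(\<lambda>x. (sq f x + sq g x) * (1/2)) summable_on A"
    by (rule summable_on_cmult_left)
  then show "(\<lambda>x. (sq f x + sq g x) / 2) summable_on A" by simp
qed (rule prod_le_sq)

lemma l2_prod: assumes "f \<in> l2 X" "g \<in> l2 X"
  shows "(\<lambda>x. f x * cnj (g x)) summable_on A"
  by (rule abs_summable_summable[OF l2_prod_abs[OF assms]])

lemma inner_add_left: assumes "f \<in> l2 X" "g \<in> l2 X" "h \<in> l2 X"
  shows "l2_inner (\<lambda>x. f x + g x) h = l2_inner f h + l2_inner g h"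
  unfolding l2_inner_def using l2_prod[OF assms(1,3)] l2_prod[OF assms(2,3)]
  by (simp add: distrib_right infsum_add)

lemma inner_scale_left: "l2_inner (\<lambda>x. c * f x) h = c * l2_inner f h"
  unfolding l2_inner_def by (simp add: mult.assoc infsum_cmult_right')

lemma inner_cnj: "l2_inner g f = cnj (l2_inner f g)"
  unfolding l2_inner_def by (simp flip: infsum_cnj add: mult.commute)

lemma inner_add_right: assumes "f \<in> l2 X" "g \<in> l2 X" "h \<in> l2 X"
  shows "l2_inner h (\<lambda>x. f x + g x) = l2_inner h f + l2_inner h g"
  by (subst (1 2 3) inner_cnj) (simp add: inner_add_left[OF assms])

lemma inner_scale_right: "l2_inner h (\<lambda>x. c * f x) = cnj c * l2_inner h f"
  by (subst (1 2) inner_cnj) (simp add: inner_scale_left)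

lemma inner_minus_left: assumes "f \<in> l2 X" "g \<in> l2 X" "h \<in> l2 X"
  shows "l2_inner (\<lambda>x. f x - g x) h = l2_inner f h - l2_inner g h"
proof -
  have e: "(\<lambda>x. f x - g x) = (\<lambda>x. f x + (-1) * g x)" by simp
  have "l2_inner (\<lambda>x. f x + (-1) * g x) h = l2_inner f h + l2_inner (\<lambda>x. (-1) * g x) h"
    by (rule inner_add_left[OF assms(1) l2_scale[OF assms(2)] assms(3)])
  also have "\<dots> = l2_inner f h + (-1) * l2_inner g h" by (simp only: inner_scale_left)
  finally show ?thesis unfolding e by simp
qed

lemma inner_minus_right: assumes "f \<in> l2 X" "g \<in> l2 X" "h \<in> l2 X"
  shows "l2_inner h (\<lambda>x. f x - g x) = l2_inner h f - l2_inner h g"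
  by (subst (1 2 3) inner_cnj) (simp add: inner_minus_left[OF assms])

definition delta :: "'a \<Rightarrow> 'a \<Rightarrow> complex" where
  "delta a = (\<lambda>x. if x = a then 1 else 0)"

lemma delta_l2: "a \<in> X \<Longrightarrow> delta a \<in> l2 X"
proof -
  have "(\<lambda>x. (cmod (delta a x))\<^sup>2) summable_on UNIV"
  proof (rule finite_nonzero_values_imp_summable_on)
    have "{x \<in> UNIV. (cmod (delta a x))\<^sup>2 \<noteq> 0} \<subseteq> {a}" by (auto simp: delta_def)
    then show "finite {x \<in> UNIV. (cmod (delta a x))\<^sup>2 \<noteq> 0}" using finite_subset by blast
  qed
  moreover assume "a \<in> X"
  ultimately show ?thesis unfolding l2_def by (auto simp: delta_def)
qed

lemma delta_not_l2: "a \<notin> X \<Longrightarrow> delta a \<notin> l2 X"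
  unfolding l2_def delta_def by auto

lemma inner_delta_right: "l2_inner f (delta a) = f a"
proof -
  have "l2_inner f (delta a) = (\<Sum>\<^sub>\<infinity>x\<in>{a}. f x * cnj (delta a x))"
    unfolding l2_inner_def by (rule infsum_cong_neutral) (auto simp: delta_def)
  then show ?thesis by (simp add: delta_def)
qed

lemma inner_delta_left: "l2_inner (delta a) f = cnj (f a)"
  by (subst inner_cnj) (simp add: inner_delta_right)

lemma sq_sum_nonneg: "0 \<le> (\<Sum>\<^sub>\<infinity>x. sq f x)"
  by (simp add: infsum_nonneg sq_nonneg)

lemma l2_norm_sq: "l2_norm f = sqrt (\<Sum>\<^sub>\<infinity>x. sq f x)"
  by (simp add: l2_norm_def sq_def)

lemma l2_norm_nonneg: "0 \<le> l2_norm f"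
  unfolding l2_norm_sq by (rule real_sqrt_ge_zero[OF sq_sum_nonneg])

lemma l2_norm_pow: "(l2_norm f)\<^sup>2 = (\<Sum>\<^sub>\<infinity>x. sq f x)"
  unfolding l2_norm_sq by (rule real_sqrt_pow2[OF sq_sum_nonneg])

lemma CS_real:
  assumes "f \<in> l2 X" "g \<in> l2 X"
  shows "(\<Sum>\<^sub>\<infinity>x. cmod (f x * cnj (g x))) \<le> l2_norm f * l2_norm g"
proof (rule infsum_le_finite_sums)
  show "(\<lambda>x. cmod (f x * cnj (g x))) summable_on UNIV"
    using l2_prod_abs[OF assms] by simp
next
  fix F :: "'a set" assume "finite F"
  have "(\<Sum>x\<in>F. cmod (f x) * cmod (g x))\<^sup>2 \<le> (\<Sum>x\<in>F. (cmod (f x))\<^sup>2) * (\<Sum>x\<in>F. (cmod (g x))\<^sup>2)"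
    by (rule Cauchy_Schwarz_ineq_sum)
  also have "\<dots> \<le> (\<Sum>\<^sub>\<infinity>x. sq f x) * (\<Sum>\<^sub>\<infinity>x. sq g x)"
  proof (rule mult_mono)
    show "(\<Sum>x\<in>F. (cmod (f x))\<^sup>2) \<le> (\<Sum>\<^sub>\<infinity>x. sq f x)"
      using finite_sum_le_infsum[OF l2_sq[OF assms(1)] \<open>finite F\<close>] by (simp add: sq_def)
    show "(\<Sum>x\<in>F. (cmod (g x))\<^sup>2) \<le> (\<Sum>\<^sub>\<infinity>x. sq g x)"
      using finite_sum_le_infsum[OF l2_sq[OF assms(2)] \<open>finite F\<close>] by (simp add: sq_def)
  qed (simp_all add: sq_sum_nonneg sum_nonneg)
  also have "\<dots> = (l2_norm f * l2_norm g)\<^sup>2" by (simp add: power_mult_distrib l2_norm_pow)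
  finally have "(\<Sum>x\<in>F. cmod (f x) * cmod (g x))\<^sup>2 \<le> (l2_norm f * l2_norm g)\<^sup>2" .
  then have "(\<Sum>x\<in>F. cmod (f x) * cmod (g x)) \<le> l2_norm f * l2_norm g"
    by (rule power2_le_imp_le) (simp add: l2_norm_nonneg)
  then show "(\<Sum>x\<in>F. cmod (f x * cnj (g x))) \<le> l2_norm f * l2_norm g"
    by (simp add: norm_mult)
qed

lemma CS: assumes "f \<in> l2 X" "g \<in> l2 X"
  shows "cmod (l2_inner f g) \<le> l2_norm f * l2_norm g"
proof -
  have "cmod (infsum (\<lambda>x. f x * cnj (g x)) UNIV) \<le> infsum (\<lambda>x. cmod (f x * cnj (g x))) UNIV"
    by (rule norm_infsum_bound[OF l2_prod_abs[OF assms]])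
  then show ?thesis unfolding l2_inner_def using CS_real[OF assms] by linarith
qed


definition trunc :: "'a set \<Rightarrow> ('a \<Rightarrow> complex) \<Rightarrow> 'a \<Rightarrow> complex" where
  "trunc F f = (\<lambda>x. if x \<in> F then f x else 0)"

definition mat :: "'a op \<Rightarrow> 'a \<Rightarrow> 'a \<Rightarrow> complex" where
  "mat T a b = T (delta b) a"

lemma bop_l2: "T \<in> bop X \<Longrightarrow> f \<in> l2 X \<Longrightarrow> T f \<in> l2 X"
  by (simp add: bop_def)

lemma bop_out: "T \<in> bop X \<Longrightarrow> f \<notin> l2 X \<Longrightarrow> T f = (\<lambda>_. 0)"
  by (simp add: bop_def)

lemma bop_add: "T \<in> bop X \<Longrightarrow> f \<in> l2 X \<Longrightarrow> g \<in> l2 X \<Longrightarrow> T (\<lambda>x. f x + g x) = (\<lambda>x. T f x + T g x)"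
  by (simp add: bop_def)

lemma bop_scale: "T \<in> bop X \<Longrightarrow> f \<in> l2 X \<Longrightarrow> T (\<lambda>x. c * f x) = (\<lambda>x. c * T f x)"
  by (simp add: bop_def)

lemma bop_bound: assumes "T \<in> bop X"
  obtains C where "C \<ge> 0" "\<And>f. f \<in> l2 X \<Longrightarrow> l2_norm (T f) \<le> C * l2_norm f"
proof -
  obtain C where C: "\<forall>f\<in>l2 X. l2_norm (T f) \<le> C * l2_norm f" using assms by (auto simp: bop_def)
  have "l2_norm (T f) \<le> max C 0 * l2_norm f" if "f \<in> l2 X" for f
  proof -
    have "C * l2_norm f \<le> max C 0 * l2_norm f" by (rule mult_right_mono) (simp_all add: l2_norm_nonneg)
    then show ?thesis using C that by fastforce
  qed
  then show ?thesis using that[of "max C 0"] by simp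
qed

lemma bop_zero: assumes "T \<in> bop X" shows "T (\<lambda>_. 0) = (\<lambda>_. 0)"
proof -
  have "T (\<lambda>x. 0 * (0::complex)) = (\<lambda>x. 0 * T (\<lambda>_. 0) x)"
    by (rule bop_scale[OF assms]) (simp add: l2_zero)
  then show ?thesis by simp
qed

lemma bop_minus: "T \<in> bop X \<Longrightarrow> f \<in> l2 X \<Longrightarrow> g \<in> l2 X \<Longrightarrow> T (\<lambda>x. f x - g x) = (\<lambda>x. T f x - T g x)"
proof -
  assume a: "T \<in> bop X" "f \<in> l2 X" "g \<in> l2 X"
  have "T (\<lambda>x. f x + (-1) * g x) = (\<lambda>x. T f x + T (\<lambda>x. (-1) * g x) x)"
    by (rule bop_add[OF a(1,2) l2_scale[OF a(3)]])
  also have "T (\<lambda>x. (-1) * g x) = (\<lambda>x. (-1) * T g x)" by (rule bop_scale[OF a(1,3)])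
  finally show ?thesis by simp
qed

lemma l2_sum: "finite F \<Longrightarrow> (\<And>b. b \<in> F \<Longrightarrow> g b \<in> l2 X) \<Longrightarrow> (\<lambda>x. \<Sum>b\<in>F. c b * g b x) \<in> l2 X"
proof (induction F rule: finite_induct)
  case empty then show ?case by (simp add: l2_zero)
next
  case (insert a F)
  have "(\<lambda>x. (\<Sum>b\<in>F. c b * g b x) + c a * g a x) \<in> l2 X"
    using insert by (intro l2_add l2_scale) auto
  then show ?case using insert by (simp add: add.commute)
qed

lemma bop_sum: assumes "T \<in> bop X"
  shows "finite F \<Longrightarrow> (\<And>b. b \<in> F \<Longrightarrow> g b \<in> l2 X) \<Longrightarrow>
    T (\<lambda>x. \<Sum>b\<in>F. c b * g b x) = (\<lambda>y. \<Sum>b\<in>F. c b * T (g b) y)"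
proof (induction F rule: finite_induct)
  case empty then show ?case by (simp add: bop_zero[OF assms])
next
  case (insert a F)
  have l: "(\<lambda>x. \<Sum>b\<in>F. c b * g b x) \<in> l2 X" using insert by (intro l2_sum) auto
  have "T (\<lambda>x. (\<Sum>b\<in>F. c b * g b x) + c a * g a x)
      = (\<lambda>y. T (\<lambda>x. \<Sum>b\<in>F. c b * g b x) y + T (\<lambda>x. c a * g a x) y)"
    using insert l by (intro bop_add[OF assms] l2_scale) auto
  also have "T (\<lambda>x. c a * g a x) = (\<lambda>y. c a * T (g a) y)"
    using insert by (intro bop_scale[OF assms]) auto
  finally show ?case using insert by (simp add: add.commute)
qed

lemma inner_sum_left: assumes "h \<in> l2 X"
  shows "finite F \<Longrightarrow> (\<And>b. b \<in> F \<Longrightarrow> g b \<in> l2 X) \<Longrightarrow>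
    l2_inner (\<lambda>x. \<Sum>b\<in>F. c b * g b x) h = (\<Sum>b\<in>F. c b * l2_inner (g b) h)"
proof (induction F rule: finite_induct)
  case empty then show ?case by (simp add: l2_inner_def)
next
  case (insert a F)
  have l: "(\<lambda>x. \<Sum>b\<in>F. c b * g b x) \<in> l2 X" using insert by (intro l2_sum) auto
  have "l2_inner (\<lambda>x. (\<Sum>b\<in>F. c b * g b x) + c a * g a x) h
      = l2_inner (\<lambda>x. \<Sum>b\<in>F. c b * g b x) h + l2_inner (\<lambda>x. c a * g a x) h"
    using insert l assms by (intro inner_add_left l2_scale) auto
  then show ?case using insert by (simp add: add.commute inner_scale_left)
qed

lemma delta_sum: "finite F \<Longrightarrow> (\<lambda>x. \<Sum>b\<in>F. c b * delta b x) = trunc F c"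
proof (rule ext)
  fix x assume "finite F"
  have "(\<Sum>b\<in>F. c b * delta b x) = (\<Sum>b\<in>F. if b = x then c b else 0)"
    by (rule sum.cong) (auto simp: delta_def)
  also have "\<dots> = trunc F c x" using \<open>finite F\<close> by (simp add: trunc_def sum.delta')
  finally show "(\<Sum>b\<in>F. c b * delta b x) = trunc F c x" .
qed

lemma trunc_l2: assumes "finite F" "F \<subseteq> X" shows "trunc F c \<in> l2 X"
proof -
  have "(\<lambda>x. \<Sum>b\<in>F. c b * delta b x) \<in> l2 X"
    using assms by (intro l2_sum) (auto intro: delta_l2)
  then show ?thesis using delta_sum[OF assms(1)] by simp
qed

lemma bop_trunc: assumes "T \<in> bop X" "finite F" "F \<subseteq> X"
  shows "T (trunc F c) = (\<lambda>y. \<Sum>b\<in>F. c b * T (delta b) y)"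
  using bop_sum[OF assms(1) assms(2), of delta c] delta_sum[OF assms(2), of c] assms(3)
  by (auto intro: delta_l2)

lemma infsum_finite_support:
  assumes "finite F" "\<And>x. x \<notin> F \<Longrightarrow> h x = 0"
  shows "(\<Sum>\<^sub>\<infinity>x. h x) = (\<Sum>x\<in>F. h x)"
proof -
  have "(\<Sum>\<^sub>\<infinity>x. h x) = (\<Sum>\<^sub>\<infinity>x\<in>F. h x)"
    by (rule infsum_cong_neutral) (use assms in auto)
  then show ?thesis using assms(1) by simp
qed

lemma summable_finite_support:
  assumes "finite F" "\<And>x. x \<notin> F \<Longrightarrow> h x = 0"
  shows "h summable_on A"
proof (rule finite_nonzero_values_imp_summable_on)
  have "{x \<in> A. h x \<noteq> 0} \<subseteq> F" using assms by auto
  then show "finite {x \<in> A. h x \<noteq> 0}" using assms(1) finite_subset by blast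
qed

lemma sq_trunc: "sq (trunc F f) x = (if x \<in> F then sq f x else 0)"
  by (simp add: sq_def trunc_def)

lemma norm_trunc_sq: assumes "finite F"
  shows "(l2_norm (trunc F f))\<^sup>2 = (\<Sum>x\<in>F. sq f x)"
proof -
  have "(l2_norm (trunc F f))\<^sup>2 = (\<Sum>\<^sub>\<infinity>x. sq (trunc F f) x)" by (rule l2_norm_pow)
  also have "\<dots> = (\<Sum>x\<in>F. sq (trunc F f) x)"
    by (rule infsum_finite_support[OF assms]) (simp add: sq_trunc)
  also have "\<dots> = (\<Sum>x\<in>F. sq f x)" by (rule sum.cong) (simp_all add: sq_trunc)
  finally show ?thesis .
qed

lemma norm_trunc_le: assumes "f \<in> l2 X" "finite F"
  shows "l2_norm (trunc F f) \<le> l2_norm f"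
proof -
  have "(\<Sum>x\<in>F. sq f x) \<le> (\<Sum>\<^sub>\<infinity>x. sq f x)"
    by (rule finite_sum_le_infsum[OF l2_sq[OF assms(1)] assms(2)]) (simp_all add: sq_nonneg)
  then have "(l2_norm (trunc F f))\<^sup>2 \<le> (l2_norm f)\<^sup>2"
    unfolding norm_trunc_sq[OF assms(2)] l2_norm_pow[of f] .
  then show ?thesis by (rule power2_le_imp_le) (simp add: l2_norm_nonneg)
qed

lemma norm_rest_sq: assumes "f \<in> l2 X" "finite F"
  shows "(l2_norm (\<lambda>x. f x - trunc F f x))\<^sup>2 = (\<Sum>\<^sub>\<infinity>x. sq f x) - (\<Sum>x\<in>F. sq f x)"
proof -
  let ?a = "\<lambda>x. if x \<in> F then sq f x else 0"
  let ?b = "\<lambda>x. if x \<in> F then 0 else sq f x"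
  have sa: "?a summable_on UNIV" by (rule summable_finite_support[OF assms(2)]) simp
  have sb: "?b summable_on UNIV"
    by (rule summable_on_comparison_test[OF l2_sq[OF assms(1)]]) (simp_all add: sq_nonneg)
  have "(\<Sum>\<^sub>\<infinity>x. sq f x) = (\<Sum>\<^sub>\<infinity>x. ?a x + ?b x)" by (rule infsum_cong) simp
  also have "\<dots> = (\<Sum>\<^sub>\<infinity>x. ?a x) + (\<Sum>\<^sub>\<infinity>x. ?b x)" by (rule infsum_add[OF sa sb])
  also have "(\<Sum>\<^sub>\<infinity>x. ?a x) = (\<Sum>x\<in>F. ?a x)" by (rule infsum_finite_support[OF assms(2)]) simp
  also have "\<dots> = (\<Sum>x\<in>F. sq f x)" by simp
  finally have e: "(\<Sum>\<^sub>\<infinity>x. ?b x) = (\<Sum>\<^sub>\<infinity>x. sq f x) - (\<Sum>x\<in>F. sq f x)" by simp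
  have "sq (\<lambda>x. f x - trunc F f x) = ?b" by (rule ext) (simp add: sq_def trunc_def)
  then show ?thesis using e by (simp add: l2_norm_pow)
qed

lemma trunc_tendsto: assumes "f \<in> l2 X"
  shows "((\<lambda>F. l2_norm (\<lambda>x. f x - trunc F f x)) \<longlongrightarrow> 0) (finite_subsets_at_top UNIV)"
proof -
  have t: "((\<lambda>F. \<Sum>x\<in>F. sq f x) \<longlongrightarrow> (\<Sum>\<^sub>\<infinity>x. sq f x)) (finite_subsets_at_top UNIV)"
    by (rule infsum_tendsto[OF l2_sq[OF assms]])
  have "((\<lambda>F. (\<Sum>\<^sub>\<infinity>x. sq f x) - (\<Sum>x\<in>F. sq f x)) \<longlongrightarrow> (\<Sum>\<^sub>\<infinity>x. sq f x) - (\<Sum>\<^sub>\<infinity>x. sq f x))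
      (finite_subsets_at_top UNIV)"
    by (intro tendsto_diff tendsto_const t)
  then have "((\<lambda>F. sqrt ((\<Sum>\<^sub>\<infinity>x. sq f x) - (\<Sum>x\<in>F. sq f x))) \<longlongrightarrow> sqrt 0) (finite_subsets_at_top UNIV)"
    by (intro tendsto_real_sqrt) simp
  moreover have "eventually (\<lambda>F. sqrt ((\<Sum>\<^sub>\<infinity>x. sq f x) - (\<Sum>x\<in>F. sq f x)) = l2_norm (\<lambda>x. f x - trunc F f x))
      (finite_subsets_at_top UNIV)"
  proof -
    have "eventually (\<lambda>F. finite F) (finite_subsets_at_top UNIV)"
      by (simp add: eventually_finite_subsets_at_top_weakI)
    then show ?thesis
    proof (rule eventually_mono)
      fix F :: "'a set" assume "finite F"
      show "sqrt ((\<Sum>\<^sub>\<infinity>x. sq f x) - (\<Sum>x\<in>F. sq f x)) = l2_norm (\<lambda>x. f x - trunc F f x)"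
        using norm_rest_sq[OF assms \<open>finite F\<close>] l2_norm_nonneg
        by (metis real_sqrt_abs abs_of_nonneg power2_eq_square real_sqrt_abs2)
    qed
  qed
  ultimately show ?thesis by (simp add: tendsto_cong)
qed


definition Sadj :: "'a set \<Rightarrow> 'a op \<Rightarrow> 'a op" where
  "Sadj X T g = (if g \<in> l2 X then (\<lambda>b. if b \<in> X then l2_inner g (T (delta b)) else 0) else (\<lambda>_. 0))"

lemma mult_cnj_sq: "z * cnj z = complex_of_real ((cmod z)\<^sup>2)"
  by (rule complex_norm_square[symmetric])

lemma Sadj_fin:
  assumes T: "T \<in> bop X" and C: "C \<ge> 0" "\<And>f. f \<in> l2 X \<Longrightarrow> l2_norm (T f) \<le> C * l2_norm f"
    and g: "g \<in> l2 X" and F: "finite F" "F \<subseteq> X"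
  shows "(\<Sum>b\<in>F. sq (Sadj X T g) b) \<le> (C * l2_norm g)\<^sup>2"
proof -
  let ?s = "Sadj X T g"
  let ?Q = "\<Sum>b\<in>F. sq ?s b"
  let ?f = "trunc F ?s"
  have fl: "?f \<in> l2 X" by (rule trunc_l2[OF F])
  have Tf: "T ?f = (\<lambda>y. \<Sum>b\<in>F. ?s b * T (delta b) y)" by (rule bop_trunc[OF T F])
  have dl: "\<And>b. b \<in> F \<Longrightarrow> T (delta b) \<in> l2 X" using F by (intro bop_l2[OF T] delta_l2) auto
  have "l2_inner (T ?f) g = (\<Sum>b\<in>F. ?s b * l2_inner (T (delta b)) g)"
    unfolding Tf by (rule inner_sum_left[OF g F(1)]) (rule dl)
  also have "\<dots> = (\<Sum>b\<in>F. ?s b * cnj (?s b))"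
  proof (rule sum.cong)
    fix b assume "b \<in> F"
    then have "?s b = l2_inner g (T (delta b))" using g F by (auto simp: Sadj_def)
    then show "?s b * l2_inner (T (delta b)) g = ?s b * cnj (?s b)"
      by (simp add: inner_cnj[of g])
  qed simp
  also have "\<dots> = complex_of_real ?Q" by (simp add: mult_cnj_sq sq_def)
  finally have e: "l2_inner (T ?f) g = complex_of_real ?Q" .
  have Q0: "0 \<le> ?Q" by (simp add: sum_nonneg sq_nonneg)
  have nf: "l2_norm ?f = sqrt ?Q"
    using norm_trunc_sq[OF F(1), of ?s] l2_norm_nonneg[of ?f] by (metis real_sqrt_unique)
  have "?Q = cmod (l2_inner (T ?f) g)" unfolding e using Q0 by (simp only: norm_of_real abs_of_nonneg)
  also have "\<dots> \<le> l2_norm (T ?f) * l2_norm g" by (rule CS[OF bop_l2[OF T fl] g])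
  also have "\<dots> \<le> C * l2_norm ?f * l2_norm g"
    by (rule mult_right_mono[OF C(2)[OF fl] l2_norm_nonneg])
  finally have le: "?Q \<le> C * sqrt ?Q * l2_norm g" unfolding nf .
  show ?thesis
  proof (cases "?Q = 0")
    case True then show ?thesis by simp
  next
    case False
    then have sp: "sqrt ?Q > 0" using Q0 by simp
    have "sqrt ?Q * sqrt ?Q = ?Q" using Q0 by simp
    then have "sqrt ?Q * sqrt ?Q \<le> (C * l2_norm g) * sqrt ?Q" using le
      by (simp add: mult_ac)
    then have "sqrt ?Q \<le> C * l2_norm g" using mult_right_le_imp_le[OF _ sp] by blast
    then have "(sqrt ?Q)\<^sup>2 \<le> (C * l2_norm g)\<^sup>2"
      by (rule power_mono) (simp add: Q0)
    then show ?thesis by (simp only: real_sqrt_pow2[OF Q0])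
  qed
qed

lemma Sadj_l2:
  assumes T: "T \<in> bop X" and C: "C \<ge> 0" "\<And>f. f \<in> l2 X \<Longrightarrow> l2_norm (T f) \<le> C * l2_norm f"
    and g: "g \<in> l2 X"
  shows "Sadj X T g \<in> l2 X \<and> l2_norm (Sadj X T g) \<le> C * l2_norm g"
proof -
  let ?s = "Sadj X T g"
  have fin: "(\<Sum>b\<in>F. sq ?s b) \<le> (C * l2_norm g)\<^sup>2" if "finite F" for F
  proof -
    have "(\<Sum>b\<in>F. sq ?s b) = (\<Sum>b\<in>F \<inter> X. sq ?s b)"
      by (rule sum.mono_neutral_right) (use that g in \<open>auto simp: Sadj_def sq_def\<close>)
    also have "\<dots> \<le> (C * l2_norm g)\<^sup>2" by (rule Sadj_fin[OF T C g]) (use that in auto)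
    finally show ?thesis .
  qed
  have sm: "sq ?s summable_on UNIV"
  proof (rule nonneg_bdd_above_summable_on)
    show "bdd_above (sum (sq ?s) ` {F. F \<subseteq> UNIV \<and> finite F})"
      using fin by (auto intro!: bdd_aboveI[where M="(C * l2_norm g)\<^sup>2"])
  qed (simp add: sq_nonneg)
  have out: "\<forall>x. x \<notin> X \<longrightarrow> ?s x = 0" by (simp add: Sadj_def)
  have l: "?s \<in> l2 X" using sm out by (simp add: l2_iff)
  have "(\<Sum>\<^sub>\<infinity>x. sq ?s x) \<le> (C * l2_norm g)\<^sup>2"
    by (rule infsum_le_finite_sums[OF sm]) (rule fin)
  then have "(l2_norm ?s)\<^sup>2 \<le> (C * l2_norm g)\<^sup>2" by (simp only: l2_norm_pow)
  then have "l2_norm ?s \<le> C * l2_norm g"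
    by (rule power2_le_imp_le) (simp add: C(1) l2_norm_nonneg)
  then show ?thesis using l by simp
qed

lemma Sadj_add: assumes T: "T \<in> bop X" and g: "g \<in> l2 X" "h \<in> l2 X"
  shows "Sadj X T (\<lambda>x. g x + h x) = (\<lambda>x. Sadj X T g x + Sadj X T h x)"
proof (rule ext)
  fix b
  show "Sadj X T (\<lambda>x. g x + h x) b = Sadj X T g b + Sadj X T h b"
  proof (cases "b \<in> X")
    case True
    then have "T (delta b) \<in> l2 X" by (intro bop_l2[OF T] delta_l2)
    then show ?thesis using True g l2_add[OF g] by (simp add: Sadj_def inner_add_left)
  qed (use g l2_add[OF g] in \<open>simp add: Sadj_def\<close>)
qed

lemma Sadj_scale: assumes T: "T \<in> bop X" and g: "g \<in> l2 X"
  shows "Sadj X T (\<lambda>x. c * g x) = (\<lambda>x. c * Sadj X T g x)"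
  using g l2_scale[OF g, of c] by (auto simp: Sadj_def inner_scale_left)

lemma Sadj_adjoint:
  assumes T: "T \<in> bop X" and f: "f \<in> l2 X" and g: "g \<in> l2 X"
  shows "l2_inner (T f) g = l2_inner f (Sadj X T g)"
proof -
  obtain C where C: "C \<ge> 0" "\<And>f. f \<in> l2 X \<Longrightarrow> l2_norm (T f) \<le> C * l2_norm f"
    using bop_bound[OF T] by blast
  let ?s = "Sadj X T g"
  have sl: "?s \<in> l2 X" using Sadj_l2[OF T C g] by blast
  let ?phi = "\<lambda>b. f b * cnj (?s b)"
  let ?psi = "\<lambda>F. l2_inner (T (trunc F f)) g"
  have eq: "sum ?phi F = ?psi F" if "finite F" for F
  proof -
    have F': "finite (F \<inter> X)" "F \<inter> X \<subseteq> X" using that by auto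
    have tr: "trunc F f = trunc (F \<inter> X) f"
      by (rule ext) (use f in \<open>auto simp: trunc_def l2_out\<close>)
    have dl: "\<And>b. b \<in> F \<inter> X \<Longrightarrow> T (delta b) \<in> l2 X" by (intro bop_l2[OF T] delta_l2) auto
    have "?psi F = l2_inner (\<lambda>y. \<Sum>b\<in>F \<inter> X. f b * T (delta b) y) g"
      unfolding tr bop_trunc[OF T F'] ..
    also have "\<dots> = (\<Sum>b\<in>F \<inter> X. f b * l2_inner (T (delta b)) g)"
      by (rule inner_sum_left[OF g F'(1)]) (rule dl)
    also have "\<dots> = (\<Sum>b\<in>F \<inter> X. ?phi b)"
    proof (rule sum.cong)
      fix b assume b: "b \<in> F \<inter> X"
      then have "?s b = l2_inner g (T (delta b))" using g by (simp add: Sadj_def)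
      then show "f b * l2_inner (T (delta b)) g = ?phi b" by (simp add: inner_cnj[of g])
    qed simp
    also have "\<dots> = sum ?phi F"
      by (rule sum.mono_neutral_left) (use that f in \<open>auto simp: l2_out\<close>)
    finally show ?thesis by simp
  qed
  have lim1: "(sum ?phi \<longlongrightarrow> infsum ?phi UNIV) (finite_subsets_at_top UNIV)"
    by (rule infsum_tendsto[OF l2_prod[OF f sl]])
  have lim2: "(?psi \<longlongrightarrow> l2_inner (T f) g) (finite_subsets_at_top UNIV)"
  proof -
    have "((\<lambda>F. ?psi F - l2_inner (T f) g) \<longlongrightarrow> 0) (finite_subsets_at_top UNIV)"
    proof (rule Lim_null_comparison)
      show "eventually (\<lambda>F. norm (?psi F - l2_inner (T f) g) \<le>
          C * l2_norm g * l2_norm (\<lambda>x. f x - trunc F f x)) (finite_subsets_at_top UNIV)"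
      proof -
        have "eventually (\<lambda>F. finite F) (finite_subsets_at_top UNIV)"
          by (simp add: eventually_finite_subsets_at_top_weakI)
        then show ?thesis
        proof (rule eventually_mono)
          fix F :: "'a set" assume F: "finite F"
          have tl: "trunc (F \<inter> X) f \<in> l2 X" using F by (intro trunc_l2) auto
          have tr: "trunc F f = trunc (F \<inter> X) f"
            by (rule ext) (use f in \<open>auto simp: trunc_def l2_out\<close>)
          then have tl': "trunc F f \<in> l2 X" using tl by simp
          have dl: "(\<lambda>x. f x - trunc F f x) \<in> l2 X" by (rule l2_diff[OF f tl'])
          have "l2_inner (T f) g - ?psi F = l2_inner (\<lambda>x. T f x - T (trunc F f) x) g"
            by (rule inner_minus_left[where X=X, symmetric]) (simp_all add: bop_l2[OF T] f tl' g)
          also have "(\<lambda>x. T f x - T (trunc F f) x) = T (\<lambda>x. f x - trunc F f x)"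
            by (rule bop_minus[OF T f tl', symmetric])
          finally have e: "l2_inner (T f) g - ?psi F = l2_inner (T (\<lambda>x. f x - trunc F f x)) g" .
          have "norm (?psi F - l2_inner (T f) g) = cmod (l2_inner (T f) g - ?psi F)"
            by (simp add: norm_minus_commute)
          also have "\<dots> \<le> l2_norm (T (\<lambda>x. f x - trunc F f x)) * l2_norm g"
            unfolding e by (rule CS[OF bop_l2[OF T dl] g])
          also have "\<dots> \<le> C * l2_norm (\<lambda>x. f x - trunc F f x) * l2_norm g"
            by (rule mult_right_mono[OF C(2)[OF dl] l2_norm_nonneg])
          finally show "norm (?psi F - l2_inner (T f) g) \<le> C * l2_norm g * l2_norm (\<lambda>x. f x - trunc F f x)"
            by (simp add: mult_ac)
        qed
      qed
      show "((\<lambda>F. C * l2_norm g * l2_norm (\<lambda>x. f x - trunc F f x)) \<longlongrightarrow> 0) (finite_subsets_at_top UNIV)"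
        using tendsto_mult_right_zero[OF trunc_tendsto[OF f], of "C * l2_norm g"] by simp
    qed
    then show ?thesis by (rule LIM_zero_cancel)
  qed
  have "eventually (\<lambda>F. ?psi F = sum ?phi F) (finite_subsets_at_top UNIV)"
  proof -
    have "eventually (\<lambda>F. finite F) (finite_subsets_at_top UNIV)"
      by (simp add: eventually_finite_subsets_at_top_weakI)
    then show ?thesis by (rule eventually_mono) (simp add: eq)
  qed
  then have "(sum ?phi \<longlongrightarrow> l2_inner (T f) g) (finite_subsets_at_top UNIV)"
    by (rule Lim_transform_eventually[OF lim2])
  then have "l2_inner (T f) g = infsum ?phi UNIV"
    using lim1 by (intro tendsto_unique[OF finite_subsets_at_top_neq_bot])
  then show ?thesis by (simp add: l2_inner_def)
qed

lemma Sadj_bop: assumes T: "T \<in> bop X" shows "Sadj X T \<in> bop X"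
proof -
  obtain C where C: "C \<ge> 0" "\<And>f. f \<in> l2 X \<Longrightarrow> l2_norm (T f) \<le> C * l2_norm f"
    using bop_bound[OF T] by blast
  show ?thesis unfolding bop_def
    using Sadj_l2[OF T C] Sadj_add[OF T] Sadj_scale[OF T]
    by (auto simp: Sadj_def intro!: exI[where x=C])
qed

lemma adj_exists: assumes "T \<in> bop X" shows "\<exists>S\<in>bop X. is_adjoint X T S"
  using Sadj_bop[OF assms] Sadj_adjoint[OF assms] unfolding is_adjoint_def by blast


lemma l2_norm_scale: "l2_norm (\<lambda>x. c * f x) = cmod c * l2_norm f"
proof -
  have "l2_norm (\<lambda>x. c * f x) = sqrt ((cmod c)\<^sup>2 * (\<Sum>\<^sub>\<infinity>x. sq f x))"
    by (simp add: l2_norm_sq sq_scale infsum_cmult_right')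
  also have "\<dots> = cmod c * l2_norm f" by (simp add: real_sqrt_mult l2_norm_sq)
  finally show ?thesis .
qed

lemma sq_add_le2: "sq (\<lambda>x. f x + g x) x \<le> sq f x + sq g x + 2 * cmod (f x * cnj (g x))"
proof -
  have "cmod (f x + g x) \<le> cmod (f x) + cmod (g x)" by (rule norm_triangle_ineq)
  then have "(cmod (f x + g x))\<^sup>2 \<le> (cmod (f x) + cmod (g x))\<^sup>2"
    by (simp add: power_mono)
  then show ?thesis by (simp add: sq_def power2_sum norm_mult)
qed

lemma l2_norm_triangle: assumes f: "f \<in> l2 X" and g: "g \<in> l2 X"
  shows "l2_norm (\<lambda>x. f x + g x) \<le> l2_norm f + l2_norm g"
proof -
  have s1: "sq (\<lambda>x. f x + g x) summable_on UNIV" using l2_add[OF f g] by (rule l2_sq)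
  have s2: "(\<lambda>x. sq f x + sq g x + 2 * cmod (f x * cnj (g x))) summable_on UNIV"
    using l2_sq[OF f] l2_sq[OF g] l2_prod_abs[OF f g]
    by (intro summable_on_add summable_on_cmult_right) auto
  have "(l2_norm (\<lambda>x. f x + g x))\<^sup>2 = (\<Sum>\<^sub>\<infinity>x. sq (\<lambda>x. f x + g x) x)" by (rule l2_norm_pow)
  also have "\<dots> \<le> (\<Sum>\<^sub>\<infinity>x. sq f x + sq g x + 2 * cmod (f x * cnj (g x)))"
    by (rule infsum_mono[OF s1 s2]) (rule sq_add_le2)
  also have "\<dots> = (\<Sum>\<^sub>\<infinity>x. sq f x) + (\<Sum>\<^sub>\<infinity>x. sq g x) + 2 * (\<Sum>\<^sub>\<infinity>x. cmod (f x * cnj (g x)))"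
  proof -
    have a: "(\<lambda>x. sq f x + sq g x) summable_on UNIV"
      using l2_sq[OF f] l2_sq[OF g] by (rule summable_on_add)
    have b: "(\<lambda>x. 2 * cmod (f x * cnj (g x))) summable_on UNIV"
      using l2_prod_abs[OF f g] by (intro summable_on_cmult_right) auto
    show ?thesis
      using infsum_add[OF a b] infsum_add[OF l2_sq[OF f] l2_sq[OF g]] infsum_cmult_right'[of 2]
      by simp
  qed
  also have "\<dots> \<le> (l2_norm f)\<^sup>2 + (l2_norm g)\<^sup>2 + 2 * (l2_norm f * l2_norm g)"
    using CS_real[OF f g] by (simp add: l2_norm_pow)
  also have "\<dots> = (l2_norm f + l2_norm g)\<^sup>2" by (simp add: power2_sum)
  finally show ?thesis
    by (rule power2_le_imp_le) (simp add: l2_norm_nonneg add_nonneg_nonneg)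
qed

lemma bop_out_X: assumes "T \<in> bop X" "a \<notin> X" shows "T f a = 0"
proof (cases "f \<in> l2 X")
  case True
  show ?thesis by (rule l2_out[OF bop_l2[OF assms(1) True] assms(2)])
qed (simp add: bop_out[OF assms(1)])

lemma idop_bop: "idop X \<in> bop X"
  unfolding bop_def idop_def
  by (auto simp: l2_add l2_scale intro!: exI[where x=1])

lemma op_add_bop: assumes T: "T \<in> bop X" and S: "S \<in> bop X" shows "op_add T S \<in> bop X"
proof -
  obtain C1 where C1: "C1 \<ge> 0" "\<And>f. f \<in> l2 X \<Longrightarrow> l2_norm (T f) \<le> C1 * l2_norm f"
    using bop_bound[OF T] by blast
  obtain C2 where C2: "C2 \<ge> 0" "\<And>f. f \<in> l2 X \<Longrightarrow> l2_norm (S f) \<le> C2 * l2_norm f"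
    using bop_bound[OF S] by blast
  have b: "l2_norm (op_add T S f) \<le> (C1 + C2) * l2_norm f" if "f \<in> l2 X" for f
  proof -
    have "l2_norm (op_add T S f) \<le> l2_norm (T f) + l2_norm (S f)"
      unfolding op_add_def by (rule l2_norm_triangle[OF bop_l2[OF T that] bop_l2[OF S that]])
    also have "\<dots> \<le> C1 * l2_norm f + C2 * l2_norm f" using C1(2)[OF that] C2(2)[OF that] by simp
    finally show ?thesis by (simp add: distrib_right)
  qed
  show ?thesis unfolding bop_def mem_Collect_eq
  proof (intro conjI ballI allI impI)
    fix f assume fl: "f \<in> l2 X"
    show "op_add T S f \<in> l2 X" unfolding op_add_def by (rule l2_add[OF bop_l2[OF T fl] bop_l2[OF S fl]])
  next
    fix f assume "f \<notin> l2 X"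
    then show "op_add T S f = (\<lambda>_. 0)" using T S by (simp add: op_add_def bop_out)
  next
    fix f g assume "f \<in> l2 X" "g \<in> l2 X"
    then show "op_add T S (\<lambda>x. f x + g x) = (\<lambda>x. op_add T S f x + op_add T S g x)"
      using T S by (simp add: op_add_def bop_add algebra_simps)
  next
    fix f c assume "f \<in> l2 X"
    then show "op_add T S (\<lambda>x. c * f x) = (\<lambda>x. c * op_add T S f x)"
      using T S by (simp add: op_add_def bop_scale algebra_simps)
  next
    show "\<exists>C. \<forall>f\<in>l2 X. l2_norm (op_add T S f) \<le> C * l2_norm f" using b by blast
  qed
qed

lemma op_scale_bop: assumes T: "T \<in> bop X" shows "op_scale c T \<in> bop X"
proof -
  obtain C1 where C1: "C1 \<ge> 0" "\<And>f. f \<in> l2 X \<Longrightarrow> l2_norm (T f) \<le> C1 * l2_norm f"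
    using bop_bound[OF T] by blast
  have b: "l2_norm (op_scale c T f) \<le> (cmod c * C1) * l2_norm f" if "f \<in> l2 X" for f
    unfolding op_scale_def l2_norm_scale using C1(2)[OF that]
    by (simp add: mult.assoc mult_left_mono)
  show ?thesis unfolding bop_def mem_Collect_eq
  proof (intro conjI ballI allI impI)
    fix f assume fl: "f \<in> l2 X"
    show "op_scale c T f \<in> l2 X" unfolding op_scale_def by (rule l2_scale[OF bop_l2[OF T fl]])
  next
    fix f assume "f \<notin> l2 X"
    then show "op_scale c T f = (\<lambda>_. 0)" using T by (simp add: op_scale_def bop_out)
  next
    fix f g assume "f \<in> l2 X" "g \<in> l2 X"
    then show "op_scale c T (\<lambda>x. f x + g x) = (\<lambda>x. op_scale c T f x + op_scale c T g x)"
      using T by (simp add: op_scale_def bop_add algebra_simps)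
  next
    fix f d assume "f \<in> l2 X"
    then show "op_scale c T (\<lambda>x. d * f x) = (\<lambda>x. d * op_scale c T f x)"
      using T by (simp add: op_scale_def bop_scale algebra_simps)
  next
    show "\<exists>C. \<forall>f\<in>l2 X. l2_norm (op_scale c T f) \<le> C * l2_norm f" using b by blast
  qed
qed

lemma comp_bop: assumes T: "T \<in> bop X" and S: "S \<in> bop X" shows "T \<circ> S \<in> bop X"
proof -
  obtain C1 where C1: "C1 \<ge> 0" "\<And>f. f \<in> l2 X \<Longrightarrow> l2_norm (T f) \<le> C1 * l2_norm f"
    using bop_bound[OF T] by blast
  obtain C2 where C2: "C2 \<ge> 0" "\<And>f. f \<in> l2 X \<Longrightarrow> l2_norm (S f) \<le> C2 * l2_norm f"
    using bop_bound[OF S] by blast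
  have b: "l2_norm ((T \<circ> S) f) \<le> (C1 * C2) * l2_norm f" if "f \<in> l2 X" for f
  proof -
    have "l2_norm ((T \<circ> S) f) \<le> C1 * l2_norm (S f)" using C1(2)[OF bop_l2[OF S that]] by simp
    also have "\<dots> \<le> C1 * (C2 * l2_norm f)" by (rule mult_left_mono[OF C2(2)[OF that] C1(1)])
    finally show ?thesis by (simp add: mult.assoc)
  qed
  show ?thesis unfolding bop_def mem_Collect_eq
  proof (intro conjI ballI allI impI)
    fix f assume "f \<in> l2 X"
    then show "(T \<circ> S) f \<in> l2 X" using T S by (simp add: bop_l2)
  next
    fix f assume "f \<notin> l2 X"
    then show "(T \<circ> S) f = (\<lambda>_. 0)" using T S by (simp add: bop_out bop_zero)
  next
    fix f g assume "f \<in> l2 X" "g \<in> l2 X"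
    then show "(T \<circ> S) (\<lambda>x. f x + g x) = (\<lambda>x. (T \<circ> S) f x + (T \<circ> S) g x)"
      using T S by (simp add: bop_add bop_l2)
  next
    fix f d assume "f \<in> l2 X"
    then show "(T \<circ> S) (\<lambda>x. d * f x) = (\<lambda>x. d * (T \<circ> S) f x)"
      using T S by (simp add: bop_scale bop_l2)
  next
    show "\<exists>C. \<forall>f\<in>l2 X. l2_norm ((T \<circ> S) f) \<le> C * l2_norm f" using b by blast
  qed
qed

lemma matrix_formula:
  assumes T: "T \<in> bop X" and f: "f \<in> l2 X" and a: "a \<in> X"
  shows "(\<lambda>b. f b * mat T a b) summable_on UNIV \<and> T f a = (\<Sum>\<^sub>\<infinity>b. f b * mat T a b)"
proof -
  let ?S = "Sadj X T"
  have dl: "delta a \<in> l2 X" by (rule delta_l2[OF a])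
  have sl: "?S (delta a) \<in> l2 X" using Sadj_bop[OF T] dl by (rule bop_l2)
  have e: "f b * cnj (?S (delta a) b) = f b * mat T a b" for b
  proof (cases "b \<in> X")
    case True
    then show ?thesis using dl by (simp add: Sadj_def inner_delta_left mat_def)
  qed (simp add: l2_out[OF f])
  have "T f a = l2_inner (T f) (delta a)" by (simp add: inner_delta_right)
  also have "\<dots> = l2_inner f (?S (delta a))" by (rule Sadj_adjoint[OF T f dl])
  also have "\<dots> = (\<Sum>\<^sub>\<infinity>b. f b * mat T a b)" unfolding l2_inner_def e ..
  finally show ?thesis using l2_prod[OF f sl, of UNIV] unfolding e by simp
qed

lemma adjoint_mat:
  assumes S: "S \<in> bop X" and adj: "is_adjoint X T S" and a: "a \<in> X" and b: "b \<in> X"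
  shows "mat S a b = cnj (mat T b a)"
proof -
  have "mat S a b = l2_inner (S (delta b)) (delta a)" by (simp add: mat_def inner_delta_right)
  also have "\<dots> = cnj (l2_inner (delta a) (S (delta b)))" by (rule inner_cnj)
  also have "l2_inner (delta a) (S (delta b)) = l2_inner (T (delta a)) (delta b)"
    using adj delta_l2[OF a] delta_l2[OF b] unfolding is_adjoint_def by simp
  also have "\<dots> = mat T b a" by (simp add: mat_def inner_delta_right)
  finally show ?thesis .
qed

lemma mat_out: "T \<in> bop X \<Longrightarrow> b \<notin> X \<Longrightarrow> mat T a b = 0"
  by (simp add: mat_def bop_out delta_not_l2)

lemma mat_out2: "T \<in> bop X \<Longrightarrow> a \<notin> X \<Longrightarrow> mat T a b = 0"
  by (simp add: mat_def bop_out_X)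

lemma small_zero: assumes "\<And>e. e > 0 \<Longrightarrow> cmod z < e" shows "z = 0"
  using assms[of "cmod z"] by (cases "z = 0") auto


lemma reindex_infsum:
  assumes "bij_betw \<phi> A A" "\<And>x. x \<notin> A \<Longrightarrow> u x = 0"
  shows "(\<Sum>\<^sub>\<infinity>h. if h \<in> A then u (\<phi> h) else 0) = (\<Sum>\<^sub>\<infinity>h. u h)"
proof -
  have "(\<Sum>\<^sub>\<infinity>h. if h \<in> A then u (\<phi> h) else 0) = (\<Sum>\<^sub>\<infinity>h\<in>A. u (\<phi> h))"
    by (rule infsum_cong_neutral) auto
  also have "\<dots> = (\<Sum>\<^sub>\<infinity>h\<in>A. u h)" by (rule infsum_reindex_bij_betw[OF assms(1)])
  also have "\<dots> = (\<Sum>\<^sub>\<infinity>h. u h)" by (rule infsum_cong_neutral) (use assms(2) in auto)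
  finally show ?thesis .
qed

lemma reindex_summable:
  fixes u :: "'a \<Rightarrow> real"
  assumes "bij_betw \<phi> A A" "u summable_on UNIV"
  shows "(\<lambda>h. if h \<in> A then u (\<phi> h) else 0) summable_on UNIV"
proof -
  have "u summable_on A" using summable_on_subset[OF assms(2) subset_UNIV] .
  then have "(\<lambda>h. u (\<phi> h)) summable_on A" using summable_on_reindex_bij_betw[OF assms(1)] by blast
  then show ?thesis by (rule summable_on_cong_neutral[THEN iffD1, rotated -1]) auto
qed

context group begin

lemma bij_lmult: "g \<in> carrier G \<Longrightarrow> bij_betw (\<lambda>h. g \<otimes> h) (carrier G) (carrier G)"
  by (rule bij_betw_byWitness[where f'="\<lambda>h. inv g \<otimes> h"]) (auto simp: m_assoc[symmetric])

lemma bij_rmult: "g \<in> carrier G \<Longrightarrow> bij_betw (\<lambda>h. h \<otimes> g) (carrier G) (carrier G)"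
  by (rule bij_betw_byWitness[where f'="\<lambda>h. h \<otimes> inv g"]) (auto simp: m_assoc)

lemma lreg_apply: "f \<in> l2 (carrier G) \<Longrightarrow> lreg G g f = (\<lambda>h. if h \<in> carrier G then f (inv g \<otimes> h) else 0)"
  by (simp add: lreg_def)

lemma lreg_l2: assumes g: "g \<in> carrier G" and f: "f \<in> l2 (carrier G)"
  shows "lreg G g f \<in> l2 (carrier G) \<and> l2_norm (lreg G g f) = l2_norm f"
proof -
  have b: "bij_betw (\<lambda>h. inv g \<otimes> h) (carrier G) (carrier G)" using g by (intro bij_lmult) simp
  have e: "sq (lreg G g f) = (\<lambda>h. if h \<in> carrier G then sq f (inv g \<otimes> h) else 0)"
    by (rule ext) (simp add: lreg_apply[OF f] sq_def)
  have s: "sq (lreg G g f) summable_on UNIV" unfolding e by (rule reindex_summable[OF b l2_sq[OF f]])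
  have n: "(\<Sum>\<^sub>\<infinity>h. sq (lreg G g f) h) = (\<Sum>\<^sub>\<infinity>h. sq f h)"
    unfolding e by (rule reindex_infsum[OF b]) (simp add: sq_def l2_out[OF f])
  show ?thesis using s n by (simp add: l2_iff lreg_apply[OF f] l2_norm_sq)
qed

lemma lreg_bop: assumes g: "g \<in> carrier G" shows "lreg G g \<in> bop (carrier G)"
  unfolding bop_def mem_Collect_eq
proof (intro conjI ballI allI impI)
  fix f assume "f \<in> l2 (carrier G)" then show "lreg G g f \<in> l2 (carrier G)" using lreg_l2[OF g] by blast
next
  fix f assume "f \<notin> l2 (carrier G)" then show "lreg G g f = (\<lambda>_. 0)" by (simp add: lreg_def)
next
  fix f h assume "f \<in> l2 (carrier G)" "h \<in> l2 (carrier G)"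
  then show "lreg G g (\<lambda>x. f x + h x) = (\<lambda>x. lreg G g f x + lreg G g h x)"
    using l2_add[of f "carrier G" h] by (simp add: lreg_apply fun_eq_iff)
next
  fix f c assume "f \<in> l2 (carrier G)"
  then show "lreg G g (\<lambda>x. c * f x) = (\<lambda>x. c * lreg G g f x)"
    using l2_scale[of f "carrier G" c] by (simp add: lreg_apply fun_eq_iff)
next
  show "\<exists>C. \<forall>f\<in>l2 (carrier G). l2_norm (lreg G g f) \<le> C * l2_norm f"
    using lreg_l2[OF g] by (intro exI[where x=1]) simp
qed

lemma lreg_delta: assumes g: "g \<in> carrier G" and b: "b \<in> carrier G"
  shows "lreg G g (delta b) = delta (g \<otimes> b)"
proof (rule ext)
  fix h
  have la: "lreg G g (delta b) h = (if h \<in> carrier G then delta b (inv g \<otimes> h) else 0)"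
    by (simp only: lreg_apply[OF delta_l2[OF b]])
  show "lreg G g (delta b) h = delta (g \<otimes> b) h"
  proof (cases "h \<in> carrier G")
    case True
    have "(inv g \<otimes> h = b) \<longleftrightarrow> (h = g \<otimes> b)"
      using g b True by (metis inv_closed l_inv m_assoc l_one r_inv)
    then show ?thesis using True la by (simp add: delta_def)
  next
    case False
    then have "h \<noteq> g \<otimes> b" using g b by auto
    then show ?thesis using False la by (simp add: delta_def)
  qed
qed

lemma lreg_comp: assumes g: "g \<in> carrier G" and h: "h \<in> carrier G"
  shows "lreg G g \<circ> lreg G h = lreg G (g \<otimes> h)"
proof (rule ext)
  fix f
  show "(lreg G g \<circ> lreg G h) f = lreg G (g \<otimes> h) f"
  proof (cases "f \<in> l2 (carrier G)")
    case True
    have l: "lreg G h f \<in> l2 (carrier G)" using lreg_l2[OF h True] by blast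
    have "inv h \<otimes> (inv g \<otimes> k) = inv (g \<otimes> h) \<otimes> k" if "k \<in> carrier G" for k
      using g h that by (simp add: inv_mult_group m_assoc)
    then show ?thesis using True l g h by (auto simp: lreg_apply fun_eq_iff)
  next
    case False
    then show ?thesis by (simp add: lreg_def l2_zero)
  qed
qed

lemma lreg_one: "lreg G \<one> = idop (carrier G)"
proof (rule ext)
  fix f show "lreg G \<one> f = idop (carrier G) f"
    by (cases "f \<in> l2 (carrier G)") (auto simp: lreg_apply idop_def lreg_def fun_eq_iff l2_out)
qed

lemma lreg_adjoint: assumes g: "g \<in> carrier G"
  shows "is_adjoint (carrier G) (lreg G g) (lreg G (inv g))"
  unfolding is_adjoint_def
proof (intro ballI)
  fix f f' assume f: "f \<in> l2 (carrier G)" and f': "f' \<in> l2 (carrier G)"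
  have b: "bij_betw (\<lambda>k. g \<otimes> k) (carrier G) (carrier G)" by (rule bij_lmult[OF g])
  have "l2_inner (lreg G g f) f' = (\<Sum>\<^sub>\<infinity>h. if h \<in> carrier G then f (inv g \<otimes> h) * cnj (f' h) else 0)"
    unfolding l2_inner_def lreg_apply[OF f] by (rule infsum_cong) simp
  also have "\<dots> = (\<Sum>\<^sub>\<infinity>h\<in>carrier G. f (inv g \<otimes> h) * cnj (f' h))"
    by (rule infsum_cong_neutral) auto
  also have "\<dots> = (\<Sum>\<^sub>\<infinity>k\<in>carrier G. f (inv g \<otimes> (g \<otimes> k)) * cnj (f' (g \<otimes> k)))"
    by (rule infsum_reindex_bij_betw[OF b, symmetric])
  also have "\<dots> = (\<Sum>\<^sub>\<infinity>k\<in>carrier G. f k * cnj (lreg G (inv g) f' k))"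
    by (rule infsum_cong) (use g in \<open>simp add: lreg_apply[OF f'] m_assoc[symmetric]\<close>)
  also have "\<dots> = l2_inner f (lreg G (inv g) f')"
    unfolding l2_inner_def by (rule infsum_cong_neutral) (use f in \<open>auto simp: l2_out\<close>)
  finally show "l2_inner (lreg G g f) f' = l2_inner f (lreg G (inv g) f')" .
qed

end

definition Cset :: "('g, 'b) monoid_scheme \<Rightarrow> ('g \<Rightarrow> 'g \<Rightarrow> bool) \<Rightarrow> 'g op set" where
  "Cset G R = {T \<in> bop (carrier G).
     (\<forall>a\<in>carrier G. \<forall>b\<in>carrier G. \<forall>h\<in>carrier G. mat T (a \<otimes>\<^bsub>G\<^esub> h) (b \<otimes>\<^bsub>G\<^esub> h) = mat T a b)
     \<and> (\<forall>a b. \<not> R a b \<longrightarrow> mat T a b = 0)}"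


lemma mat_comp:
  assumes T: "T \<in> bop X" and S: "S \<in> bop X" and a: "a \<in> X" and b: "b \<in> X"
  shows "mat (T \<circ> S) a b = (\<Sum>\<^sub>\<infinity>k. mat S k b * mat T a k)"
proof -
  have l: "S (delta b) \<in> l2 X" by (rule bop_l2[OF S delta_l2[OF b]])
  have "mat (T \<circ> S) a b = T (S (delta b)) a" by (simp add: mat_def)
  also have "\<dots> = (\<Sum>\<^sub>\<infinity>k. S (delta b) k * mat T a k)" using matrix_formula[OF T l a] by simp
  finally show ?thesis by (simp add: mat_def)
qed

lemma mat_add: "mat (op_add T S) a b = mat T a b + mat S a b"
  by (simp add: mat_def op_add_def)

lemma mat_scale: "mat (op_scale c T) a b = c * mat T a b"
  by (simp add: mat_def op_scale_def)

lemma small_eq: assumes "\<And>e. e > 0 \<Longrightarrow> cmod (z - w) < e" shows "z = w"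
  using small_zero[of "z - w"] assms by simp

context group begin

lemma Cset_vNa:
  assumes refl: "\<And>a. R a a" and sym: "\<And>a b. R a b \<Longrightarrow> R b a"
    and trans: "\<And>a b c. R a b \<Longrightarrow> R b c \<Longrightarrow> R a c"
  shows "vNa (carrier G) (Cset G R)"
  unfolding vNa_def
proof (intro conjI ballI allI)
  show "Cset G R \<subseteq> bop (carrier G)" by (auto simp: Cset_def)
next
  show "idop (carrier G) \<in> Cset G R"
  proof -
    have m: "mat (idop (carrier G)) a b = (if b \<in> carrier G then delta b a else 0)" for a b
      by (simp add: mat_def idop_def delta_l2 delta_not_l2)
    show ?thesis unfolding Cset_def mem_Collect_eq
    proof (intro conjI ballI allI impI)
      show "idop (carrier G) \<in> bop (carrier G)" by (rule idop_bop)
    next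
      fix a b h assume "a \<in> carrier G" "b \<in> carrier G" "h \<in> carrier G"
      then show "mat (idop (carrier G)) (a \<otimes> h) (b \<otimes> h) = mat (idop (carrier G)) a b"
        by (simp add: m delta_def)
    next
      fix a b assume "\<not> R a b"
      then have "a \<noteq> b" using refl by auto
      then show "mat (idop (carrier G)) a b = 0" by (simp add: m delta_def)
    qed
  qed
next
  fix T S assume T: "T \<in> Cset G R" and S: "S \<in> Cset G R"
  then show "op_add T S \<in> Cset G R"
    by (simp add: Cset_def mat_add op_add_bop)
next
  fix T S assume T: "T \<in> Cset G R" and S: "S \<in> Cset G R"
  have Tb: "T \<in> bop (carrier G)" and Sb: "S \<in> bop (carrier G)" using T S by (auto simp: Cset_def)
  have TT: "\<And>a b h. a \<in> carrier G \<Longrightarrow> b \<in> carrier G \<Longrightarrow> h \<in> carrier G \<Longrightarrow> mat T (a \<otimes> h) (b \<otimes> h) = mat T a b"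
    and TR: "\<And>a b. \<not> R a b \<Longrightarrow> mat T a b = 0" using T by (auto simp: Cset_def)
  have ST: "\<And>a b h. a \<in> carrier G \<Longrightarrow> b \<in> carrier G \<Longrightarrow> h \<in> carrier G \<Longrightarrow> mat S (a \<otimes> h) (b \<otimes> h) = mat S a b"
    and SR: "\<And>a b. \<not> R a b \<Longrightarrow> mat S a b = 0" using S by (auto simp: Cset_def)
  have TSb: "T \<circ> S \<in> bop (carrier G)" by (rule comp_bop[OF Tb Sb])
  show "T \<circ> S \<in> Cset G R" unfolding Cset_def mem_Collect_eq
  proof (intro conjI ballI allI impI TSb)
    fix a b h assume a: "a \<in> carrier G" and b: "b \<in> carrier G" and h: "h \<in> carrier G"
    have bij: "bij_betw (\<lambda>k. k \<otimes> h) (carrier G) (carrier G)" by (rule bij_rmult[OF h])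
    have "mat (T \<circ> S) (a \<otimes> h) (b \<otimes> h) = (\<Sum>\<^sub>\<infinity>k. mat S k (b \<otimes> h) * mat T (a \<otimes> h) k)"
      using a b h by (intro mat_comp[OF Tb Sb]) auto
    also have "\<dots> = (\<Sum>\<^sub>\<infinity>k\<in>carrier G. mat S k (b \<otimes> h) * mat T (a \<otimes> h) k)"
      by (rule infsum_cong_neutral) (auto simp: mat_out2[OF Sb])
    also have "\<dots> = (\<Sum>\<^sub>\<infinity>k\<in>carrier G. mat S (k \<otimes> h) (b \<otimes> h) * mat T (a \<otimes> h) (k \<otimes> h))"
      by (rule infsum_reindex_bij_betw[OF bij, symmetric])
    also have "\<dots> = (\<Sum>\<^sub>\<infinity>k\<in>carrier G. mat S k b * mat T a k)"
      by (rule infsum_cong) (simp add: ST TT a b h)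
    also have "\<dots> = (\<Sum>\<^sub>\<infinity>k. mat S k b * mat T a k)"
      by (rule infsum_cong_neutral) (auto simp: mat_out2[OF Sb])
    also have "\<dots> = mat (T \<circ> S) a b" by (rule mat_comp[OF Tb Sb a b, symmetric])
    finally show "mat (T \<circ> S) (a \<otimes> h) (b \<otimes> h) = mat (T \<circ> S) a b" .
  next
    fix a b assume nr: "\<not> R a b"
    show "mat (T \<circ> S) a b = 0"
    proof (cases "a \<in> carrier G \<and> b \<in> carrier G")
      case True
      have z: "mat S k b * mat T a k = 0" for k
      proof (cases "R k b")
        case True
        then have "\<not> R a k" using nr trans by blast
        then show ?thesis by (simp add: TR)
      qed (simp add: SR)
      have aX: "a \<in> carrier G" and bX: "b \<in> carrier G" using True by auto
      show ?thesis by (simp only: mat_comp[OF Tb Sb aX bX] z infsum_0_simp)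
    next
      case False
      then show ?thesis using TSb by (auto simp: mat_out mat_out2)
    qed
  qed
next
  fix T c assume "T \<in> Cset G R"
  then show "op_scale c T \<in> Cset G R"
    by (simp add: Cset_def mat_scale op_scale_bop)
next
  fix T assume T: "T \<in> Cset G R"
  have Tb: "T \<in> bop (carrier G)" using T by (auto simp: Cset_def)
  have TT: "\<And>a b h. a \<in> carrier G \<Longrightarrow> b \<in> carrier G \<Longrightarrow> h \<in> carrier G \<Longrightarrow> mat T (a \<otimes> h) (b \<otimes> h) = mat T a b"
    and TR: "\<And>a b. \<not> R a b \<Longrightarrow> mat T a b = 0" using T by (auto simp: Cset_def)
  let ?S = "Sadj (carrier G) T"
  have Sb: "?S \<in> bop (carrier G)" by (rule Sadj_bop[OF Tb])
  have adj: "is_adjoint (carrier G) T ?S" using Sadj_adjoint[OF Tb] by (simp add: is_adjoint_def)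
  have m: "mat ?S a b = (if a \<in> carrier G \<and> b \<in> carrier G then cnj (mat T b a) else 0)" for a b
    using adjoint_mat[OF Sb adj] mat_out[OF Sb] mat_out2[OF Sb] by auto
  have "?S \<in> Cset G R" unfolding Cset_def mem_Collect_eq
  proof (intro conjI ballI allI impI Sb)
    fix a b h assume "a \<in> carrier G" "b \<in> carrier G" "h \<in> carrier G"
    then show "mat ?S (a \<otimes> h) (b \<otimes> h) = mat ?S a b" by (simp add: m TT)
  next
    fix a b assume "\<not> R a b"
    then have "\<not> R b a" using sym by blast
    then show "mat ?S a b = 0" by (simp add: m TR)
  qed
  then show "\<exists>S\<in>Cset G R. is_adjoint (carrier G) T S" using adj by blast
next
  show "wot_closed (carrier G) (Cset G R)"
    unfolding wot_closed_def
  proof (intro ballI impI)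
    fix T assume Tb: "T \<in> bop (carrier G)"
    assume ap: "\<forall>F. finite F \<longrightarrow> F \<subseteq> l2 (carrier G) \<times> l2 (carrier G) \<longrightarrow> (\<forall>\<epsilon>>0. \<exists>S\<in>Cset G R.
            \<forall>(f, g)\<in>F. cmod (l2_inner (\<lambda>x. T f x - S f x) g) < \<epsilon>)"
    have key: "\<exists>S\<in>Cset G R. \<forall>(a, b)\<in>P. cmod (mat T a b - mat S a b) < e"
      if P: "finite P" "P \<subseteq> carrier G \<times> carrier G" and e: "e > 0" for P e
    proof -
      let ?F = "(\<lambda>(a, b). (delta b, delta a)) ` P"
      have fin: "finite ?F" using P by simp
      have sub: "?F \<subseteq> l2 (carrier G) \<times> l2 (carrier G)" using P by (auto intro: delta_l2)
      have "\<exists>S\<in>Cset G R. \<forall>(f, g)\<in>?F. cmod (l2_inner (\<lambda>x. T f x - S f x) g) < e"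
        using ap[rule_format, OF fin sub e] .
      then obtain S where S: "S \<in> Cset G R"
        and c: "\<forall>(f, g)\<in>?F. cmod (l2_inner (\<lambda>x. T f x - S f x) g) < e" by (elim bexE)
      have "\<forall>(a, b)\<in>P. cmod (mat T a b - mat S a b) < e"
      proof (clarify)
        fix a b assume "(a, b) \<in> P"
        then have "(delta b, delta a) \<in> ?F" by force
        then have "cmod (l2_inner (\<lambda>x. T (delta b) x - S (delta b) x) (delta a)) < e" using c by blast
        then show "cmod (mat T a b - mat S a b) < e" by (simp add: inner_delta_right mat_def)
      qed
      then show ?thesis using S by blast
    qed
    show "T \<in> Cset G R" unfolding Cset_def mem_Collect_eq
    proof (intro conjI ballI allI impI Tb)
      fix a b h assume a: "a \<in> carrier G" and b: "b \<in> carrier G" and h: "h \<in> carrier G"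
      show "mat T (a \<otimes> h) (b \<otimes> h) = mat T a b"
      proof (rule small_eq)
        fix e :: real assume e: "e > 0"
        have "finite {(a \<otimes> h, b \<otimes> h), (a, b)}" by simp
        moreover have "{(a \<otimes> h, b \<otimes> h), (a, b)} \<subseteq> carrier G \<times> carrier G" using a b h by auto
        moreover have "e / 2 > 0" using e by simp
        ultimately obtain S where S: "S \<in> Cset G R"
          and c: "\<forall>(x, y)\<in>{(a \<otimes> h, b \<otimes> h), (a, b)}. cmod (mat T x y - mat S x y) < e / 2"
          using key by blast
        have c1: "cmod (mat T (a \<otimes> h) (b \<otimes> h) - mat S (a \<otimes> h) (b \<otimes> h)) < e / 2" using c by blast
        have c2: "cmod (mat T a b - mat S a b) < e / 2" using c by blast
        have eq: "mat S (a \<otimes> h) (b \<otimes> h) = mat S a b" using S a b h by (simp add: Cset_def)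
        have "cmod (mat T (a \<otimes> h) (b \<otimes> h) - mat T a b)
            \<le> cmod (mat T (a \<otimes> h) (b \<otimes> h) - mat S (a \<otimes> h) (b \<otimes> h)) + cmod (mat T a b - mat S a b)"
        proof -
          have "mat T (a \<otimes> h) (b \<otimes> h) - mat T a b = (mat T (a \<otimes> h) (b \<otimes> h) - mat S a b) - (mat T a b - mat S a b)"
            by simp
          then show ?thesis unfolding eq by (metis norm_triangle_ineq4)
        qed
        then show "cmod (mat T (a \<otimes> h) (b \<otimes> h) - mat T a b) < e" using c1 c2 by linarith
      qed
    next
      fix a b assume nr: "\<not> R a b"
      show "mat T a b = 0"
      proof (cases "a \<in> carrier G \<and> b \<in> carrier G")
        case True
        show ?thesis
        proof (rule small_zero)
          fix e :: real assume e: "e > 0"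
          have "finite {(a, b)}" "{(a, b)} \<subseteq> carrier G \<times> carrier G" using True by auto
          then obtain S where S: "S \<in> Cset G R" and c: "\<forall>(x, y)\<in>{(a, b)}. cmod (mat T x y - mat S x y) < e"
            using key e by blast
          have "mat S a b = 0" using S nr by (simp add: Cset_def)
          then show "cmod (mat T a b) < e" using c by simp
        qed
      next
        case False
        then show ?thesis using Tb by (auto simp: mat_out mat_out2)
      qed
    qed
  qed
qed

lemma groupVN_Cset:
  assumes refl: "\<And>a. R a a" and sym: "\<And>a b. R a b \<Longrightarrow> R b a"
    and trans: "\<And>a b c. R a b \<Longrightarrow> R b c \<Longrightarrow> R a c"
    and N: "N \<subseteq> carrier G" and NR: "\<And>n b. n \<in> N \<Longrightarrow> b \<in> carrier G \<Longrightarrow> R (n \<otimes> b) b"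
  shows "groupVN G N \<subseteq> Cset G R"
proof -
  have "lreg G n \<in> Cset G R" if n: "n \<in> N" for n
  proof -
    have nc: "n \<in> carrier G" using n N by blast
    have m: "mat (lreg G n) a b = (if b \<in> carrier G then delta (n \<otimes> b) a else 0)" for a b
    proof (cases "b \<in> carrier G")
      case True then show ?thesis by (simp add: mat_def lreg_delta[OF nc True])
    next
      case False then show ?thesis by (simp add: mat_def lreg_def delta_not_l2)
    qed
    show ?thesis unfolding Cset_def mem_Collect_eq
    proof (intro conjI ballI allI impI)
      show "lreg G n \<in> bop (carrier G)" by (rule lreg_bop[OF nc])
    next
      fix a b h assume a: "a \<in> carrier G" and b: "b \<in> carrier G" and h: "h \<in> carrier G"
      have "(a \<otimes> h = n \<otimes> (b \<otimes> h)) \<longleftrightarrow> (a = n \<otimes> b)"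
        using a b h nc by (simp add: m_assoc[symmetric])
      then show "mat (lreg G n) (a \<otimes> h) (b \<otimes> h) = mat (lreg G n) a b"
        using a b h by (simp add: m delta_def)
    next
      fix a b assume nr: "\<not> R a b"
      show "mat (lreg G n) a b = 0"
      proof (cases "b \<in> carrier G")
        case True
        then have "a \<noteq> n \<otimes> b" using NR[OF n True] nr by blast
        then show ?thesis using True by (simp add: m delta_def)
      qed (simp add: m)
    qed
  qed
  then have "lreg G ` N \<subseteq> Cset G R" by blast
  moreover have v: "vNa (carrier G) (Cset G R)" using refl sym trans by (rule Cset_vNa[where R=R])
  ultimately show ?thesis unfolding groupVN_def vN_gen_def by blast
qed

end


definition conjop :: "('g, 'b) monoid_scheme \<Rightarrow> 'g \<Rightarrow> 'g op \<Rightarrow> 'g op" where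
  "conjop G h A = lreg G h \<circ> A \<circ> lreg G (inv\<^bsub>G\<^esub> h)"

lemma inner_trunc_right: assumes F: "finite F" shows "l2_inner u (trunc F g) = (\<Sum>a\<in>F. u a * cnj (g a))"
proof -
  have "l2_inner u (trunc F g) = (\<Sum>x\<in>F. u x * cnj (trunc F g x))"
    unfolding l2_inner_def by (rule infsum_finite_support[OF F]) (auto simp: trunc_def)
  also have "\<dots> = (\<Sum>a\<in>F. u a * cnj (g a))" by (rule sum.cong) (auto simp: trunc_def)
  finally show ?thesis .
qed

lemma finite_CS:
  fixes x :: "nat \<Rightarrow> real"
  shows "(\<Sum>i<K. \<bar>x i\<bar>) \<le> sqrt (real K) * sqrt (\<Sum>i<K. (x i)\<^sup>2)"
proof -
  have "(\<Sum>i<K. 1 * \<bar>x i\<bar>)\<^sup>2 \<le> (\<Sum>i<K. 1\<^sup>2) * (\<Sum>i<K. \<bar>x i\<bar>\<^sup>2)"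
    by (rule Cauchy_Schwarz_ineq_sum)
  then have "(\<Sum>i<K. \<bar>x i\<bar>)\<^sup>2 \<le> real K * (\<Sum>i<K. (x i)\<^sup>2)" by simp
  then have "sqrt ((\<Sum>i<K. \<bar>x i\<bar>)\<^sup>2) \<le> sqrt (real K * (\<Sum>i<K. (x i)\<^sup>2))"
    by (rule real_sqrt_le_mono)
  then show ?thesis by (simp add: real_sqrt_mult sum_nonneg)
qed

lemma exists_big_trunc:
  assumes f: "f \<in> l2 X" and g: "g \<in> l2 X" and eta: "\<eta> > 0"
  obtains A where "finite A" "A \<subseteq> X" "l2_norm (\<lambda>x. f x - trunc A f x) < \<eta>"
    "l2_norm (\<lambda>x. g x - trunc A g x) < \<eta>"
proof -
  have ef: "eventually (\<lambda>F. l2_norm (\<lambda>x. f x - trunc F f x) < \<eta>) (finite_subsets_at_top UNIV)"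
    by (rule order_tendstoD(2)[OF trunc_tendsto[OF f] eta])
  have eg: "eventually (\<lambda>F. l2_norm (\<lambda>x. g x - trunc F g x) < \<eta>) (finite_subsets_at_top UNIV)"
    by (rule order_tendstoD(2)[OF trunc_tendsto[OF g] eta])
  have "eventually (\<lambda>F. l2_norm (\<lambda>x. f x - trunc F f x) < \<eta> \<and> l2_norm (\<lambda>x. g x - trunc F g x) < \<eta>)
      (finite_subsets_at_top UNIV)" using ef eg by (rule eventually_conj)
  then obtain F0 where F0: "finite F0"
    "\<And>Y. finite Y \<Longrightarrow> F0 \<subseteq> Y \<Longrightarrow> l2_norm (\<lambda>x. f x - trunc Y f x) < \<eta> \<and> l2_norm (\<lambda>x. g x - trunc Y g x) < \<eta>"
    unfolding eventually_finite_subsets_at_top by auto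
  have c: "l2_norm (\<lambda>x. f x - trunc F0 f x) < \<eta> \<and> l2_norm (\<lambda>x. g x - trunc F0 g x) < \<eta>"
    using F0 by blast
  have tf: "trunc (F0 \<inter> X) f = trunc F0 f" by (rule ext) (auto simp: trunc_def l2_out[OF f])
  have tg: "trunc (F0 \<inter> X) g = trunc F0 g" by (rule ext) (auto simp: trunc_def l2_out[OF g])
  show ?thesis by (rule that[of "F0 \<inter> X"]) (use F0(1) c tf tg in auto)
qed

context group begin

lemma conjop_bop: "h \<in> carrier G \<Longrightarrow> A \<in> bop (carrier G) \<Longrightarrow> conjop G h A \<in> bop (carrier G)"
  unfolding conjop_def by (intro comp_bop lreg_bop) auto

lemma conjop_bound:
  assumes h: "h \<in> carrier G" and A: "A \<in> bop (carrier G)"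
    and B: "\<And>f. f \<in> l2 (carrier G) \<Longrightarrow> l2_norm (A f) \<le> B * l2_norm f"
    and f: "f \<in> l2 (carrier G)"
  shows "l2_norm (conjop G h A f) \<le> B * l2_norm f"
proof -
  have ih: "inv h \<in> carrier G" using h by simp
  have l1: "lreg G (inv h) f \<in> l2 (carrier G)" and n1: "l2_norm (lreg G (inv h) f) = l2_norm f"
    using lreg_l2[OF ih f] by auto
  have l2: "A (lreg G (inv h) f) \<in> l2 (carrier G)" by (rule bop_l2[OF A l1])
  have "l2_norm (conjop G h A f) = l2_norm (A (lreg G (inv h) f))"
    using lreg_l2[OF h l2] by (simp add: conjop_def)
  also have "\<dots> \<le> B * l2_norm f" using B[OF l1] n1 by simp
  finally show ?thesis .
qed

lemma mat_conjop:
  assumes h: "h \<in> carrier G" and A: "A \<in> bop (carrier G)" and a: "a \<in> carrier G" and b: "b \<in> carrier G"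
  shows "mat (conjop G h A) a b = mat A (inv h \<otimes> a) (inv h \<otimes> b)"
proof -
  have ih: "inv h \<in> carrier G" using h by simp
  have l: "A (delta (inv h \<otimes> b)) \<in> l2 (carrier G)" using ih b by (intro bop_l2[OF A] delta_l2) simp
  have "mat (conjop G h A) a b = lreg G h (A (delta (inv h \<otimes> b))) a"
    by (simp add: mat_def conjop_def lreg_delta[OF ih b])
  also have "\<dots> = A (delta (inv h \<otimes> b)) (inv h \<otimes> a)" using a by (simp add: lreg_apply[OF l])
  finally show ?thesis by (simp add: mat_def)
qed

lemma toeplitz_c:
  assumes toe: "\<forall>a\<in>carrier G. \<forall>b\<in>carrier G. \<forall>h\<in>carrier G. mat A (a \<otimes> h) (b \<otimes> h) = mat A a b"
    and p: "p \<in> carrier G" and q: "q \<in> carrier G"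
  shows "mat A p q = mat A (p \<otimes> inv q) \<one>"
proof -
  have "mat A ((p \<otimes> inv q) \<otimes> q) (\<one> \<otimes> q) = mat A (p \<otimes> inv q) \<one>"
    by (rule toe[rule_format]) (use p q in simp_all)
  moreover have "(p \<otimes> inv q) \<otimes> q = p" using p q by (simp add: m_assoc)
  ultimately show ?thesis using q by simp
qed

lemma mat_conjop_c:
  assumes toe: "\<forall>a\<in>carrier G. \<forall>b\<in>carrier G. \<forall>h\<in>carrier G. mat A (a \<otimes> h) (b \<otimes> h) = mat A a b"
    and h: "h \<in> carrier G" and A: "A \<in> bop (carrier G)" and a: "a \<in> carrier G" and b: "b \<in> carrier G"
  shows "mat (conjop G h A) a b = mat A (inv h \<otimes> (a \<otimes> inv b) \<otimes> h) \<one>"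
proof -
  have "mat A (inv h \<otimes> a) (inv h \<otimes> b) = mat A ((inv h \<otimes> a) \<otimes> inv (inv h \<otimes> b)) \<one>"
    by (rule toeplitz_c[OF toe]) (use h a b in simp_all)
  then have "mat (conjop G h A) a b = mat A ((inv h \<otimes> a) \<otimes> inv (inv h \<otimes> b)) \<one>"
    using mat_conjop[OF h A a b] by simp
  moreover have "(inv h \<otimes> a) \<otimes> inv (inv h \<otimes> b) = inv h \<otimes> (a \<otimes> inv b) \<otimes> h"
    using h a b by (simp add: inv_mult_group m_assoc)
  ultimately show ?thesis by simp
qed

end


lemma div_mul_helper: "d \<noteq> 0 \<Longrightarrow> (e::real) / d * d = e" by simp

context group begin

lemma avg_core:
  assumes A: "A \<in> bop (carrier G)"
    and toe: "\<forall>a\<in>carrier G. \<forall>b\<in>carrier G. \<forall>h\<in>carrier G. mat A (a \<otimes> h) (b \<otimes> h) = mat A a b"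
    and hs: "\<And>D i. hs D i \<in> carrier G"
    and good: "\<And>J. finite J \<Longrightarrow> J \<subseteq> carrier G \<Longrightarrow> \<exists>D0. \<forall>D\<ge>D0. \<forall>j\<in>J.
        (\<forall>i. mat A (inv (hs D i) \<otimes> j \<otimes> hs D i) \<one> = 0) \<or> inj (\<lambda>i. inv (hs D i) \<otimes> j \<otimes> hs D i)"
    and f: "f \<in> l2 (carrier G)" and g: "g \<in> l2 (carrier G)" and e: "\<epsilon> > 0"
  shows "\<exists>n. \<forall>D\<ge>n. \<forall>K\<ge>n. cmod (\<Sum>i<K. l2_inner (conjop G (hs D i) A f) g) \<le> \<epsilon> * real K"
proof -
  obtain B where B: "B \<ge> 0" "\<And>f. f \<in> l2 (carrier G) \<Longrightarrow> l2_norm (A f) \<le> B * l2_norm f"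
    using bop_bound[OF A] by blast
  define cz where "cz = A (delta \<one>)"
  have czl: "cz \<in> l2 (carrier G)" unfolding cz_def by (rule bop_l2[OF A delta_l2]) simp
  have czm: "\<And>j. mat A j \<one> = cz j" by (simp add: cz_def mat_def)
  define nf where "nf = l2_norm f"
  define ng where "ng = l2_norm g"
  have nf0: "nf \<ge> 0" and ng0: "ng \<ge> 0" by (simp_all add: nf_def ng_def l2_norm_nonneg)
  define \<eta> where "\<eta> = \<epsilon> / (4 * (B + 1) * (nf + ng + 1))"
  have den: "4 * (B + 1) * (nf + ng + 1) > 0" using B(1) nf0 ng0 by simp
  have eta: "\<eta> > 0" unfolding \<eta>_def using e den by simp
  have etaeq: "\<eta> * (4 * (B + 1) * (nf + ng + 1)) = \<epsilon>"
    unfolding \<eta>_def by (rule div_mul_helper) (use den in linarith)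
  obtain A0 where A0: "finite A0" "A0 \<subseteq> carrier G"
    "l2_norm (\<lambda>x. f x - trunc A0 f x) < \<eta>" "l2_norm (\<lambda>x. g x - trunc A0 g x) < \<eta>"
    using exists_big_trunc[OF f g eta] by blast
  define f0 where "f0 = trunc A0 f"
  define g0 where "g0 = trunc A0 g"
  have f0l: "f0 \<in> l2 (carrier G)" unfolding f0_def by (rule trunc_l2[OF A0(1,2)])
  have g0l: "g0 \<in> l2 (carrier G)" unfolding g0_def by (rule trunc_l2[OF A0(1,2)])
  have nf0le: "l2_norm f0 \<le> nf" unfolding f0_def nf_def by (rule norm_trunc_le[OF f A0(1)])
  define J where "J = (\<lambda>(a, b). a \<otimes> inv b) ` (A0 \<times> A0)"
  have Jf: "finite J" unfolding J_def using A0(1) by simp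
  have JX: "J \<subseteq> carrier G" unfolding J_def using A0(2) by auto
  obtain D0 where D0: "\<And>D j. D \<ge> D0 \<Longrightarrow> j \<in> J \<Longrightarrow>
      (\<forall>i. mat A (inv (hs D i) \<otimes> j \<otimes> hs D i) \<one> = 0) \<or> inj (\<lambda>i. inv (hs D i) \<otimes> j \<otimes> hs D i)"
    using good[OF Jf JX] by blast
  define L where "L = (\<Sum>a\<in>A0. \<Sum>b\<in>A0. cmod (f b) * cmod (g a)) * l2_norm cz"
  have L0: "L \<ge> 0" unfolding L_def by (simp add: sum_nonneg l2_norm_nonneg)
  define K0 where "K0 = nat \<lceil>(2 * L / \<epsilon>)\<^sup>2\<rceil>"
  show ?thesis
  proof (intro exI[of _ "max D0 K0"] allI impI)
    fix D K :: nat assume D: "max D0 K0 \<le> D" and K: "max D0 K0 \<le> K"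
    define Z where "Z i = conjop G (hs D i) A" for i
    have Zb: "Z i \<in> bop (carrier G)" for i unfolding Z_def by (rule conjop_bop[OF hs A])
    have ZB: "l2_norm (Z i u) \<le> B * l2_norm u" if "u \<in> l2 (carrier G)" for i u
      unfolding Z_def by (rule conjop_bound[OF hs A B(2) that])
    have err: "cmod (l2_inner (Z i f) g - l2_inner (Z i f0) g0) \<le> \<epsilon> / 2" for i
    proof -
      have dl: "(\<lambda>x. f x - f0 x) \<in> l2 (carrier G)" by (rule l2_diff[OF f f0l])
      have dg: "(\<lambda>x. g x - g0 x) \<in> l2 (carrier G)" by (rule l2_diff[OF g g0l])
      have e1: "l2_inner (Z i f) g - l2_inner (Z i f0) g = l2_inner (Z i (\<lambda>x. f x - f0 x)) g"
      proof -
        have "l2_inner (Z i f) g - l2_inner (Z i f0) g = l2_inner (\<lambda>x. Z i f x - Z i f0 x) g"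
          by (rule inner_minus_left[where X="carrier G", symmetric]) (simp_all add: bop_l2[OF Zb] f f0l g)
        also have "(\<lambda>x. Z i f x - Z i f0 x) = Z i (\<lambda>x. f x - f0 x)"
          by (rule bop_minus[OF Zb f f0l, symmetric])
        finally show ?thesis .
      qed
      have e2: "l2_inner (Z i f0) g - l2_inner (Z i f0) g0 = l2_inner (Z i f0) (\<lambda>x. g x - g0 x)"
        by (rule inner_minus_right[where X="carrier G", symmetric]) (simp_all add: bop_l2[OF Zb] f0l g g0l)
      have b1: "cmod (l2_inner (Z i (\<lambda>x. f x - f0 x)) g) \<le> B * \<eta> * ng"
      proof -
        have "cmod (l2_inner (Z i (\<lambda>x. f x - f0 x)) g) \<le> l2_norm (Z i (\<lambda>x. f x - f0 x)) * ng"
          unfolding ng_def by (rule CS[OF bop_l2[OF Zb dl] g])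
        also have "\<dots> \<le> (B * l2_norm (\<lambda>x. f x - f0 x)) * ng"
          by (rule mult_right_mono[OF ZB[OF dl] ng0])
        also have "\<dots> \<le> (B * \<eta>) * ng"
          using A0(3) B(1) ng0 unfolding f0_def by (intro mult_right_mono mult_left_mono) simp_all
        finally show ?thesis .
      qed
      have b2: "cmod (l2_inner (Z i f0) (\<lambda>x. g x - g0 x)) \<le> B * nf * \<eta>"
      proof -
        have "cmod (l2_inner (Z i f0) (\<lambda>x. g x - g0 x)) \<le> l2_norm (Z i f0) * l2_norm (\<lambda>x. g x - g0 x)"
          by (rule CS[OF bop_l2[OF Zb f0l] dg])
        also have "\<dots> \<le> (B * nf) * \<eta>"
        proof (rule mult_mono)
          show "l2_norm (Z i f0) \<le> B * nf"
            using ZB[OF f0l] nf0le B(1) by (meson mult_left_mono order_trans)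
          show "l2_norm (\<lambda>x. g x - g0 x) \<le> \<eta>" using A0(4) unfolding g0_def by simp
        qed (simp_all add: B(1) nf0 l2_norm_nonneg)
        finally show ?thesis .
      qed
      have "l2_inner (Z i f) g - l2_inner (Z i f0) g0
          = l2_inner (Z i (\<lambda>x. f x - f0 x)) g + l2_inner (Z i f0) (\<lambda>x. g x - g0 x)"
        using e1 e2 by (simp add: algebra_simps)
      then have "cmod (l2_inner (Z i f) g - l2_inner (Z i f0) g0) \<le> B * \<eta> * ng + B * nf * \<eta>"
        using b1 b2 norm_triangle_ineq[of "l2_inner (Z i (\<lambda>x. f x - f0 x)) g"
            "l2_inner (Z i f0) (\<lambda>x. g x - g0 x)"] by simp
      also have "\<dots> = \<eta> * (B * (nf + ng))" by (simp add: algebra_simps)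
      also have "\<dots> \<le> \<eta> * ((B + 1) * (nf + ng + 1))"
        using eta B(1) nf0 ng0 by (intro mult_left_mono mult_mono) simp_all
      also have "\<dots> = \<epsilon> / 4" using etaeq by (simp add: algebra_simps)
      also have "\<dots> \<le> \<epsilon> / 2" using e by simp
      finally show ?thesis .
    qed
    define t where "t j i = inv (hs D i) \<otimes> j \<otimes> hs D i" for j i
    have matZ: "mat (Z i) a b = cz (t (a \<otimes> inv b) i)" if "a \<in> carrier G" "b \<in> carrier G" for i a b
      unfolding Z_def t_def czm[symmetric] by (rule mat_conjop_c[OF toe hs A that])
    have main: "(\<Sum>i<K. l2_inner (Z i f0) g0)
        = (\<Sum>a\<in>A0. \<Sum>b\<in>A0. f b * cnj (g a) * (\<Sum>i<K. cz (t (a \<otimes> inv b) i)))"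
    proof -
      have "l2_inner (Z i f0) g0 = (\<Sum>a\<in>A0. \<Sum>b\<in>A0. f b * cnj (g a) * cz (t (a \<otimes> inv b) i))" for i
      proof -
        have "l2_inner (Z i f0) g0 = (\<Sum>a\<in>A0. Z i f0 a * cnj (g a))"
          unfolding g0_def by (rule inner_trunc_right[OF A0(1)])
        also have "\<dots> = (\<Sum>a\<in>A0. (\<Sum>b\<in>A0. f b * Z i (delta b) a) * cnj (g a))"
          unfolding f0_def bop_trunc[OF Zb A0(1,2)] ..
        also have "\<dots> = (\<Sum>a\<in>A0. \<Sum>b\<in>A0. f b * cnj (g a) * cz (t (a \<otimes> inv b) i))"
        proof (rule sum.cong[OF refl])
          fix a assume a: "a \<in> A0"
          show "(\<Sum>b\<in>A0. f b * Z i (delta b) a) * cnj (g a) = (\<Sum>b\<in>A0. f b * cnj (g a) * cz (t (a \<otimes> inv b) i))"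
            unfolding sum_distrib_right
          proof (rule sum.cong[OF refl])
            fix b assume b: "b \<in> A0"
            have "Z i (delta b) a = cz (t (a \<otimes> inv b) i)"
              using matZ[of a b i] a b A0(2) by (auto simp: mat_def)
            then show "f b * Z i (delta b) a * cnj (g a) = f b * cnj (g a) * cz (t (a \<otimes> inv b) i)"
              by (simp add: mult_ac)
          qed
        qed
        finally show ?thesis .
      qed
      then have "(\<Sum>i<K. l2_inner (Z i f0) g0) = (\<Sum>i<K. \<Sum>a\<in>A0. \<Sum>b\<in>A0. f b * cnj (g a) * cz (t (a \<otimes> inv b) i))"
        by simp
      also have "\<dots> = (\<Sum>a\<in>A0. \<Sum>i<K. \<Sum>b\<in>A0. f b * cnj (g a) * cz (t (a \<otimes> inv b) i))"
        by (rule sum.swap)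
      also have "\<dots> = (\<Sum>a\<in>A0. \<Sum>b\<in>A0. \<Sum>i<K. f b * cnj (g a) * cz (t (a \<otimes> inv b) i))"
        by (rule sum.cong[OF refl]) (rule sum.swap)
      also have "\<dots> = (\<Sum>a\<in>A0. \<Sum>b\<in>A0. f b * cnj (g a) * (\<Sum>i<K. cz (t (a \<otimes> inv b) i)))"
        by (simp add: sum_distrib_left)
      finally show ?thesis .
    qed
    have DD: "D \<ge> D0" using D by simp
    have inner: "cmod (\<Sum>i<K. cz (t j i)) \<le> sqrt (real K) * l2_norm cz" if j: "j \<in> J" for j
    proof -
      have nn: "0 \<le> sqrt (real K) * l2_norm cz" by (simp add: l2_norm_nonneg)
      from D0[OF DD j] show ?thesis
      proof
        assume "\<forall>i. mat A (inv (hs D i) \<otimes> j \<otimes> hs D i) \<one> = 0"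
        then have "\<And>i. cz (t j i) = 0" by (simp add: t_def czm)
        then show ?thesis using nn by simp
      next
        assume inj: "inj (\<lambda>i. inv (hs D i) \<otimes> j \<otimes> hs D i)"
        then have inj': "inj_on (t j) {..<K}" by (simp add: t_def inj_on_def inj_def)
        have "cmod (\<Sum>i<K. cz (t j i)) \<le> (\<Sum>i<K. cmod (cz (t j i)))" by (rule norm_sum)
        also have "\<dots> = (\<Sum>i<K. \<bar>cmod (cz (t j i))\<bar>)" by simp
        also have "\<dots> \<le> sqrt (real K) * sqrt (\<Sum>i<K. (cmod (cz (t j i)))\<^sup>2)" by (rule finite_CS)
        also have "\<dots> \<le> sqrt (real K) * l2_norm cz"
        proof (rule mult_left_mono)
          have "(\<Sum>i<K. (cmod (cz (t j i)))\<^sup>2) = (\<Sum>i<K. sq cz (t j i))" by (simp add: sq_def)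
          also have "\<dots> = (\<Sum>y\<in>t j ` {..<K}. sq cz y)" by (simp add: sum.reindex[OF inj'])
          also have "\<dots> \<le> (\<Sum>\<^sub>\<infinity>y. sq cz y)"
            by (rule finite_sum_le_infsum[OF l2_sq[OF czl]]) (simp_all add: sq_nonneg)
          finally have "(\<Sum>i<K. (cmod (cz (t j i)))\<^sup>2) \<le> (l2_norm cz)\<^sup>2" by (simp add: l2_norm_pow)
          then have "sqrt (\<Sum>i<K. (cmod (cz (t j i)))\<^sup>2) \<le> sqrt ((l2_norm cz)\<^sup>2)" by (rule real_sqrt_le_mono)
          then show "sqrt (\<Sum>i<K. (cmod (cz (t j i)))\<^sup>2) \<le> l2_norm cz" by (simp add: l2_norm_nonneg)
        qed simp
        finally show ?thesis .
      qed
    qed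
    have part1: "cmod (\<Sum>i<K. l2_inner (Z i f0) g0) \<le> sqrt (real K) * L"
    proof -
      have "cmod (\<Sum>i<K. l2_inner (Z i f0) g0)
          \<le> (\<Sum>a\<in>A0. \<Sum>b\<in>A0. cmod (f b * cnj (g a) * (\<Sum>i<K. cz (t (a \<otimes> inv b) i))))"
        unfolding main by (rule order_trans[OF norm_sum sum_mono]) (rule norm_sum)
      also have "\<dots> \<le> (\<Sum>a\<in>A0. \<Sum>b\<in>A0. cmod (f b) * cmod (g a) * (sqrt (real K) * l2_norm cz))"
      proof (intro sum_mono)
        fix a b assume a: "a \<in> A0" and b: "b \<in> A0"
        have "a \<otimes> inv b \<in> J" unfolding J_def using a b by force
        then show "cmod (f b * cnj (g a) * (\<Sum>i<K. cz (t (a \<otimes> inv b) i)))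
            \<le> cmod (f b) * cmod (g a) * (sqrt (real K) * l2_norm cz)"
          using inner by (simp add: norm_mult mult_left_mono)
      qed
      also have "\<dots> = sqrt (real K) * L"
        unfolding L_def by (simp add: sum_distrib_right sum_distrib_left mult_ac)
      finally show ?thesis .
    qed
    have part2: "sqrt (real K) * L \<le> \<epsilon> * real K / 2"
    proof -
      have KK: "real K \<ge> (2 * L / \<epsilon>)\<^sup>2"
      proof -
        have "K0 \<le> K" using K by simp
        then have "real K0 \<le> real K" by simp
        moreover have "(2 * L / \<epsilon>)\<^sup>2 \<le> real K0" unfolding K0_def by linarith
        ultimately show ?thesis by linarith
      qed
      then have "sqrt ((2 * L / \<epsilon>)\<^sup>2) \<le> sqrt (real K)" by (rule real_sqrt_le_mono)
      then have "2 * L / \<epsilon> \<le> sqrt (real K)" using L0 e by simp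
      then have "2 * L \<le> \<epsilon> * sqrt (real K)" using e by (simp add: divide_le_eq mult.commute)
      then have "sqrt (real K) * (2 * L) \<le> sqrt (real K) * (\<epsilon> * sqrt (real K))"
        by (rule mult_left_mono) simp
      also have "\<dots> = \<epsilon> * real K" by simp
      finally show ?thesis by simp
    qed
    have "(\<Sum>i<K. l2_inner (Z i f) g)
        = (\<Sum>i<K. l2_inner (Z i f0) g0) + (\<Sum>i<K. l2_inner (Z i f) g - l2_inner (Z i f0) g0)"
      by (simp add: sum.distrib[symmetric])
    then have "cmod (\<Sum>i<K. l2_inner (Z i f) g)
        \<le> cmod (\<Sum>i<K. l2_inner (Z i f0) g0) + cmod (\<Sum>i<K. l2_inner (Z i f) g - l2_inner (Z i f0) g0)"
      by (simp add: norm_triangle_ineq)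
    also have "cmod (\<Sum>i<K. l2_inner (Z i f) g - l2_inner (Z i f0) g0) \<le> (\<Sum>i<K. \<epsilon> / 2)"
      by (rule order_trans[OF norm_sum sum_mono]) (rule err)
    also have "(\<Sum>i<K. \<epsilon> / 2) = \<epsilon> * real K / 2" by simp
    finally show "cmod (\<Sum>i<K. l2_inner (conjop G (hs D i) A f) g) \<le> \<epsilon> * real K"
      using part1 part2 unfolding Z_def by linarith
  qed
qed

end


interpretation Gsd: group Gsd by (rule group_Gsd)

abbreviation "Rf \<equiv> (\<lambda>(a::mat2 \<times> vec2) b. fst a = fst b)"

lemma fst_mult: "fst (p \<otimes>\<^bsub>Gsd\<^esub> q) = mmul (fst p) (fst q)"
  by (cases p, cases q) (simp add: Gsd_mult)

lemma snd_mult: "snd (p \<otimes>\<^bsub>Gsd\<^esub> q) = vadd (snd p) (mvec (fst p) (snd q))"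
  by (cases p, cases q) (simp add: Gsd_mult)

lemma zero_Finf: "(\<lambda>_. False) \<in> Finf" by (simp add: Finf_def)

lemma Nsd_sub: "Nsd \<subseteq> carrier Gsd"
  by (auto simp: Nsd_def Gsd_carrier idm_GLinf)

lemma Cset_vNa_Gsd: "vNa (carrier Gsd) (Cset Gsd Rf)"
  by (rule Gsd.Cset_vNa) auto

lemma LN_Cset: "groupVN Gsd Nsd \<subseteq> Cset Gsd Rf"
proof (rule Gsd.groupVN_Cset)
  show "Nsd \<subseteq> carrier Gsd" by (rule Nsd_sub)
next
  fix n b assume "n \<in> Nsd" "b \<in> carrier Gsd"
  then show "fst (n \<otimes>\<^bsub>Gsd\<^esub> b) = fst b" by (auto simp: Nsd_def fst_mult)
qed auto

lemma invol_elem: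
  assumes g: "g \<in> GLinf" and gg: "mmul g g = idm"
  shows "(g, (\<lambda>_. False)) \<in> carrier Gsd"
    and "inv\<^bsub>Gsd\<^esub> (g, (\<lambda>_. False)) = (g, (\<lambda>_. False))"
    and "(g, (\<lambda>_. False)) \<otimes>\<^bsub>Gsd\<^esub> (g, (\<lambda>_. False)) = \<one>\<^bsub>Gsd\<^esub>"
    and "(g, (\<lambda>_. False)) \<otimes>\<^bsub>Gsd\<^esub> (idm, w) \<otimes>\<^bsub>Gsd\<^esub> (g, (\<lambda>_. False)) = (idm, mvec g w)"
proof -
  show c: "(g, (\<lambda>_. False)) \<in> carrier Gsd" using g by (simp add: Gsd_carrier zero_Finf)
  show s: "(g, (\<lambda>_. False)) \<otimes>\<^bsub>Gsd\<^esub> (g, (\<lambda>_. False)) = \<one>\<^bsub>Gsd\<^esub>"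
    using gg by (simp add: Gsd_mult Gsd_one)
  show "inv\<^bsub>Gsd\<^esub> (g, (\<lambda>_. False)) = (g, (\<lambda>_. False))" by (rule Gsd.inv_equality[OF s c c])
  show "(g, (\<lambda>_. False)) \<otimes>\<^bsub>Gsd\<^esub> (idm, w) \<otimes>\<^bsub>Gsd\<^esub> (g, (\<lambda>_. False)) = (idm, mvec g w)"
    using gg by (simp add: Gsd_mult)
qed

lemma conj_in_M:
  assumes inv: "G_invariant Gsd M" and h: "h \<in> carrier Gsd" and T: "T \<in> M"
  shows "conjop Gsd h T \<in> M"
proof -
  have ih: "inv\<^bsub>Gsd\<^esub> h \<in> carrier Gsd" using h by simp
  have "lreg Gsd (inv\<^bsub>Gsd\<^esub> h) \<in> bop (carrier Gsd)" by (rule Gsd.lreg_bop[OF ih])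
  moreover have "is_adjoint (carrier Gsd) (lreg Gsd h) (lreg Gsd (inv\<^bsub>Gsd\<^esub> h))"
    by (rule Gsd.lreg_adjoint[OF h])
  ultimately show ?thesis using inv h T unfolding G_invariant_def conjop_def by blast
qed

lemma fin_max:
  fixes P :: "'a \<Rightarrow> nat \<Rightarrow> bool"
  assumes "finite F" "\<And>p. p \<in> F \<Longrightarrow> \<exists>n. P p n" "\<And>p n m. P p n \<Longrightarrow> n \<le> m \<Longrightarrow> P p m"
  shows "\<exists>n. \<forall>p\<in>F. P p n"
  using assms(1,2)
proof (induction F rule: finite_induct)
  case empty then show ?case by simp
next
  case (insert a F)
  then obtain n1 where n1: "\<forall>p\<in>F. P p n1" by blast
  obtain n2 where n2: "P a n2" using insert by blast
  have "\<forall>p\<in>insert a F. P p (max n1 n2)"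
  proof
    fix p assume "p \<in> insert a F"
    then show "P p (max n1 n2)"
    proof
      assume "p = a" then show ?thesis using assms(3)[OF n2 max.cobounded2] by simp
    next
      assume pF: "p \<in> F" then show ?thesis using assms(3)[OF bspec[OF n1 pF] max.cobounded1] by simp
    qed
  qed
  then show ?case by blast
qed

primrec opsum :: "'a set \<Rightarrow> nat \<Rightarrow> (nat \<Rightarrow> 'a op) \<Rightarrow> 'a op" where
  "opsum X 0 A = op_scale 0 (idop X)"
| "opsum X (Suc K) A = op_add (opsum X K A) (A K)"

lemma opsum_apply: "opsum X K A f = (\<lambda>x. \<Sum>i<K. A i f x)"
  by (induction K) (simp_all add: op_scale_def op_add_def)

lemma opsum_in: "vNa X M \<Longrightarrow> (\<And>i. A i \<in> M) \<Longrightarrow> opsum X K A \<in> M"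
  by (induction K) (simp_all add: vNa_def)


lemma gen_in_groupVN: "n \<in> N \<Longrightarrow> lreg G n \<in> groupVN G N"
  unfolding groupVN_def vN_gen_def by blast

lemma Cset_bop: "T \<in> Cset G R \<Longrightarrow> T \<in> bop (carrier G)"
  by (simp add: Cset_def)

lemma Cset_toe: "T \<in> Cset G R \<Longrightarrow> \<forall>a\<in>carrier G. \<forall>b\<in>carrier G. \<forall>h\<in>carrier G. mat T (a \<otimes>\<^bsub>G\<^esub> h) (b \<otimes>\<^bsub>G\<^esub> h) = mat T a b"
  by (simp add: Cset_def)

lemma Cset_R: "T \<in> Cset G R \<Longrightarrow> \<not> R a b \<Longrightarrow> mat T a b = 0"
  by (simp add: Cset_def)

lemma scalar_case:
  assumes xC: "x \<in> Cset Gsd Rf"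
    and zero: "\<And>k. k \<in> carrier Gsd \<Longrightarrow> k \<noteq> \<one>\<^bsub>Gsd\<^esub> \<Longrightarrow> mat x k \<one>\<^bsub>Gsd\<^esub> = 0"
  shows "x \<in> scalars (carrier Gsd)"
proof -
  let ?e = "\<one>\<^bsub>Gsd\<^esub>"
  let ?ce = "mat x ?e ?e"
  have xb: "x \<in> bop (carrier Gsd)" by (rule Cset_bop[OF xC])
  have toe: "\<forall>a\<in>carrier Gsd. \<forall>b\<in>carrier Gsd. \<forall>h\<in>carrier Gsd. mat x (a \<otimes>\<^bsub>Gsd\<^esub> h) (b \<otimes>\<^bsub>Gsd\<^esub> h) = mat x a b"
    by (rule Cset_toe[OF xC])
  have m: "mat x a b = (if b = a then ?ce else 0)" if a: "a \<in> carrier Gsd" for a b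
  proof (cases "b \<in> carrier Gsd")
    case True
    have t: "mat x a b = mat x (a \<otimes>\<^bsub>Gsd\<^esub> inv\<^bsub>Gsd\<^esub> b) ?e" by (rule Gsd.toeplitz_c[OF toe a True])
    show ?thesis
    proof (cases "b = a")
      case True
      then show ?thesis using t a by simp
    next
      case False
      have ne: "a \<otimes>\<^bsub>Gsd\<^esub> inv\<^bsub>Gsd\<^esub> b \<noteq> ?e"
      proof
        assume "a \<otimes>\<^bsub>Gsd\<^esub> inv\<^bsub>Gsd\<^esub> b = ?e"
        then have "a \<otimes>\<^bsub>Gsd\<^esub> inv\<^bsub>Gsd\<^esub> b \<otimes>\<^bsub>Gsd\<^esub> b = ?e \<otimes>\<^bsub>Gsd\<^esub> b" by simp
        then have "a = b" using a \<open>b \<in> carrier Gsd\<close> by (simp add: Gsd.m_assoc)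
        then show False using False by simp
      qed
      have "a \<otimes>\<^bsub>Gsd\<^esub> inv\<^bsub>Gsd\<^esub> b \<in> carrier Gsd" using a True by simp
      then show ?thesis using t ne zero False by simp
    qed
  next
    case False
    then have "b \<noteq> a" using a by auto
    then show ?thesis using mat_out[OF xb False] by simp
  qed
  have "x = op_scale ?ce (idop (carrier Gsd))"
  proof (rule ext)
    fix f
    show "x f = op_scale ?ce (idop (carrier Gsd)) f"
    proof (cases "f \<in> l2 (carrier Gsd)")
      case True
      show ?thesis
      proof (rule ext)
        fix a
        show "x f a = op_scale ?ce (idop (carrier Gsd)) f a"
        proof (cases "a \<in> carrier Gsd")
          case aX: True
          have "x f a = (\<Sum>\<^sub>\<infinity>b. f b * mat x a b)" using matrix_formula[OF xb True aX] by simp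
          also have "\<dots> = (\<Sum>b\<in>{a}. f b * mat x a b)"
            by (rule infsum_finite_support) (simp_all add: m[OF aX])
          also have "\<dots> = ?ce * f a" by (simp add: m[OF aX])
          finally show ?thesis using True by (simp add: op_scale_def idop_def)
        next
          case False
          then show ?thesis using True by (simp add: op_scale_def idop_def bop_out_X[OF xb] l2_out)
        qed
      qed
    next
      case False
      then show ?thesis by (simp add: op_scale_def idop_def bop_out[OF xb])
    qed
  qed
  then show ?thesis unfolding scalars_def by blast
qed

lemma find_k:
  assumes xC: "x \<in> Cset Gsd Rf" and ns: "x \<notin> scalars (carrier Gsd)"
  shows "\<exists>v. v \<in> Finf \<and> v \<noteq> (\<lambda>_. False) \<and> mat x (idm, v) \<one>\<^bsub>Gsd\<^esub> \<noteq> 0"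
proof -
  obtain k where k: "k \<in> carrier Gsd" "k \<noteq> \<one>\<^bsub>Gsd\<^esub>" "mat x k \<one>\<^bsub>Gsd\<^esub> \<noteq> 0"
    using scalar_case[OF xC] ns by blast
  have "fst k = idm"
  proof (rule ccontr)
    assume "fst k \<noteq> idm"
    then have "\<not> Rf k \<one>\<^bsub>Gsd\<^esub>" by (simp add: Gsd_one)
    then show False using Cset_R[OF xC] k(3) by blast
  qed
  then have ke: "k = (idm, snd k)" by (cases k) simp
  have "snd k \<in> Finf" using k(1) by (cases k) (simp add: Gsd_carrier)
  moreover have "snd k \<noteq> (\<lambda>_. False)" using k(2) ke by (auto simp: Gsd_one)
  ultimately show ?thesis using k(3) ke by metis
qed


lemma conj_group_identity:
  assumes h: "h \<in> carrier Gsd" and j: "j \<in> carrier Gsd" and hh: "h \<otimes>\<^bsub>Gsd\<^esub> h = \<one>\<^bsub>Gsd\<^esub>"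
  shows "h \<otimes>\<^bsub>Gsd\<^esub> (h \<otimes>\<^bsub>Gsd\<^esub> j \<otimes>\<^bsub>Gsd\<^esub> h) \<otimes>\<^bsub>Gsd\<^esub> h = j"
proof -
  have "h \<otimes>\<^bsub>Gsd\<^esub> (h \<otimes>\<^bsub>Gsd\<^esub> j \<otimes>\<^bsub>Gsd\<^esub> h) \<otimes>\<^bsub>Gsd\<^esub> h
      = (h \<otimes>\<^bsub>Gsd\<^esub> h) \<otimes>\<^bsub>Gsd\<^esub> j \<otimes>\<^bsub>Gsd\<^esub> (h \<otimes>\<^bsub>Gsd\<^esub> h)"
    using h j by (simp add: Gsd.m_assoc)
  then show ?thesis using hh j by simp
qed

lemma uk_in_M:
  assumes M: "vNa (carrier Gsd) M" and ginv: "G_invariant Gsd M" and xM: "x \<in> M"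
    and xC: "x \<in> Cset Gsd Rf"
    and v: "v \<in> Finf" "v \<noteq> (\<lambda>_. False)" and ck0: "mat x (idm, v) \<one>\<^bsub>Gsd\<^esub> \<noteq> 0"
  shows "lreg Gsd (idm, v) \<in> M"
proof -
  define e where "e = \<one>\<^bsub>Gsd\<^esub>"
  define k where "k = (idm, v)"
  define ce where "ce = mat x e e"
  define ck where "ck = mat x k e"
  have ck0': "ck \<noteq> 0" using ck0 by (simp add: ck_def k_def e_def)
  have eX: "e \<in> carrier Gsd" by (simp add: e_def)
  have e_eq: "e = (idm, (\<lambda>_. False))" by (simp add: e_def Gsd_one)
  have kX: "k \<in> carrier Gsd" using v by (simp add: k_def Gsd_carrier idm_GLinf)
  have kN: "k \<in> Nsd" using v by (simp add: k_def Nsd_def)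
  have ke: "k \<noteq> e" using v by (simp add: k_def e_eq)
  define uk where "uk = lreg Gsd k"
  have ukb: "uk \<in> bop (carrier Gsd)" unfolding uk_def by (rule Gsd.lreg_bop[OF kX])
  have ukC: "uk \<in> Cset Gsd Rf" unfolding uk_def using LN_Cset gen_in_groupVN[OF kN] by blast
  have xb: "x \<in> bop (carrier Gsd)" by (rule Cset_bop[OF xC])
  have Mv: "M \<subseteq> bop (carrier Gsd)" "idop (carrier Gsd) \<in> M"
    "\<And>T S. T \<in> M \<Longrightarrow> S \<in> M \<Longrightarrow> op_add T S \<in> M" "\<And>T c. T \<in> M \<Longrightarrow> op_scale c T \<in> M"
    "wot_closed (carrier Gsd) M"
    using M unfolding vNa_def by auto
  have Cv: "idop (carrier Gsd) \<in> Cset Gsd Rf"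
    "\<And>T S. T \<in> Cset Gsd Rf \<Longrightarrow> S \<in> Cset Gsd Rf \<Longrightarrow> op_add T S \<in> Cset Gsd Rf"
    "\<And>T c. T \<in> Cset Gsd Rf \<Longrightarrow> op_scale c T \<in> Cset Gsd Rf"
    using Cset_vNa_Gsd unfolding vNa_def by auto
  define y where "y = op_add x (op_scale (- ce) (idop (carrier Gsd)))"
  have yM: "y \<in> M" unfolding y_def using xM Mv by blast
  define z where "z = op_add y (op_scale (- ck) uk)"
  have yC: "y \<in> Cset Gsd Rf" unfolding y_def using xC Cv by blast
  have zC: "z \<in> Cset Gsd Rf" unfolding z_def using yC ukC Cv by blast
  have zb: "z \<in> bop (carrier Gsd)" by (rule Cset_bop[OF zC])
  have ztoe: "\<forall>a\<in>carrier Gsd. \<forall>b\<in>carrier Gsd. \<forall>h\<in>carrier Gsd. mat z (a \<otimes>\<^bsub>Gsd\<^esub> h) (b \<otimes>\<^bsub>Gsd\<^esub> h) = mat z a b"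
    by (rule Cset_toe[OF zC])
  have zmat: "mat z j e = mat x j e - ce * delta e j - ck * delta k j" for j
  proof -
    have "mat (idop (carrier Gsd)) j e = delta e j" by (simp add: mat_def idop_def delta_l2[OF eX])
    moreover have "mat uk j e = delta k j"
      using Gsd.lreg_delta[OF kX eX] kX by (simp add: mat_def uk_def e_def)
    ultimately show ?thesis by (simp add: z_def y_def mat_add mat_scale)
  qed
  have cz_e: "mat z e e = 0" using ke by (simp add: zmat ce_def delta_def)
  have cz_k: "mat z k e = 0" using ke by (simp add: zmat ck_def delta_def)
  have yz: "y f w = z f w + ck * uk f w" for f w by (simp add: z_def op_add_def op_scale_def)
  obtain r where r: "v r" using v(2) by auto
  define gm where "gm D i = gblk v r (D + Suc r) i" for D i
  define hs where "hs D i = (gm D i, (\<lambda>_::nat. False))" for D i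
  have gmG: "gm D i \<in> GLinf" "mmul (gm D i) (gm D i) = idm" for D i
    unfolding gm_def by (rule gblk_GLinf, simp)+
  have hsX: "hs D i \<in> carrier Gsd" for D i unfolding hs_def by (rule invol_elem(1)[OF gmG])
  have hsinv: "inv\<^bsub>Gsd\<^esub> (hs D i) = hs D i" for D i unfolding hs_def by (rule invol_elem(2)[OF gmG])
  have hshh: "hs D i \<otimes>\<^bsub>Gsd\<^esub> hs D i = \<one>\<^bsub>Gsd\<^esub>" for D i unfolding hs_def by (rule invol_elem(3)[OF gmG])
  have hsconj: "hs D i \<otimes>\<^bsub>Gsd\<^esub> (idm, w) \<otimes>\<^bsub>Gsd\<^esub> hs D i = (idm, mvec (gm D i) w)" for D i w
    unfolding hs_def by (rule invol_elem(4)[OF gmG])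
  have gmv: "mvec (gm D i) v = v" for D i unfolding gm_def by (rule gblk_fix[of v r, OF r])
  have hsk: "hs D i \<otimes>\<^bsub>Gsd\<^esub> k \<otimes>\<^bsub>Gsd\<^esub> inv\<^bsub>Gsd\<^esub> (hs D i) = k" for D i
    unfolding hsinv k_def hsconj gmv ..
  have good: "\<exists>D0. \<forall>D\<ge>D0. \<forall>j\<in>J.
      (\<forall>i. mat z (inv\<^bsub>Gsd\<^esub> (hs D i) \<otimes>\<^bsub>Gsd\<^esub> j \<otimes>\<^bsub>Gsd\<^esub> hs D i) \<one>\<^bsub>Gsd\<^esub> = 0)
      \<or> inj (\<lambda>i. inv\<^bsub>Gsd\<^esub> (hs D i) \<otimes>\<^bsub>Gsd\<^esub> j \<otimes>\<^bsub>Gsd\<^esub> hs D i)"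
    if J: "finite J" "J \<subseteq> carrier Gsd" for J
  proof -
    let ?S = "(\<Union>j\<in>J. {t. snd j t}) \<union> {t. v t}"
    have "finite {t. snd j t}" if "j \<in> J" for j
      using that J(2) by (cases j) (auto simp: Gsd_carrier Finf_def)
    then have "finite ?S" using J(1) v(1) by (simp add: Finf_def)
    then have "\<exists>m. \<forall>t\<in>?S. t < m" by (simp only: finite_nat_set_iff_bounded)
    then obtain D0 where D0: "\<forall>t\<in>?S. t < D0" by (elim exE)
    have bndS: "\<not> snd j t" if "j \<in> J" "t \<ge> D0" for j t
    proof
      assume "snd j t" then have tS: "t \<in> ?S" using that by blast
      from D0 tS have "t < D0" by (rule bspec)
      then show False using that by simp
    qed
    have bndv: "\<not> v t" if "t \<ge> D0" for t
    proof
      assume "v t" then have tS: "t \<in> ?S" by blast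
      from D0 tS have "t < D0" by (rule bspec)
      then show False using that by simp
    qed
    show ?thesis
    proof (intro exI[of _ D0] allI impI ballI)
      fix D j assume D: "D0 \<le> D" and jJ: "j \<in> J"
      have jX: "j \<in> carrier Gsd" using jJ J(2) by blast
      show "(\<forall>i. mat z (inv\<^bsub>Gsd\<^esub> (hs D i) \<otimes>\<^bsub>Gsd\<^esub> j \<otimes>\<^bsub>Gsd\<^esub> hs D i) \<one>\<^bsub>Gsd\<^esub> = 0)
          \<or> inj (\<lambda>i. inv\<^bsub>Gsd\<^esub> (hs D i) \<otimes>\<^bsub>Gsd\<^esub> j \<otimes>\<^bsub>Gsd\<^esub> hs D i)"
      proof (cases "fst j = idm")
        case False
        have "mat z (hs D i \<otimes>\<^bsub>Gsd\<^esub> j \<otimes>\<^bsub>Gsd\<^esub> hs D i) \<one>\<^bsub>Gsd\<^esub> = 0" for i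
        proof -
          have "fst (hs D i \<otimes>\<^bsub>Gsd\<^esub> j \<otimes>\<^bsub>Gsd\<^esub> hs D i) \<noteq> idm"
          proof
            assume a: "fst (hs D i \<otimes>\<^bsub>Gsd\<^esub> j \<otimes>\<^bsub>Gsd\<^esub> hs D i) = idm"
            let ?c = "hs D i \<otimes>\<^bsub>Gsd\<^esub> j \<otimes>\<^bsub>Gsd\<^esub> hs D i"
            have eq: "j = hs D i \<otimes>\<^bsub>Gsd\<^esub> ?c \<otimes>\<^bsub>Gsd\<^esub> hs D i"
              by (rule conj_group_identity[OF hsX jX hshh, symmetric])
            have "fst j = fst (hs D i \<otimes>\<^bsub>Gsd\<^esub> ?c \<otimes>\<^bsub>Gsd\<^esub> hs D i)"
              by (rule arg_cong[where f=fst, OF eq])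
            also have "\<dots> = mmul (mmul (fst (hs D i)) (fst ?c)) (fst (hs D i))"
              by (simp only: fst_mult)
            also have "\<dots> = mmul (mmul (gm D i) idm) (gm D i)"
              by (simp only: a) (simp add: hs_def)
            finally have "fst j = mmul (gm D i) (gm D i)" by simp
            then show False using False gmG(2) by simp
          qed
          then have "\<not> Rf (hs D i \<otimes>\<^bsub>Gsd\<^esub> j \<otimes>\<^bsub>Gsd\<^esub> hs D i) \<one>\<^bsub>Gsd\<^esub>" by (simp add: Gsd_one)
          then show ?thesis by (rule Cset_R[OF zC])
        qed
        then show ?thesis by (simp add: hsinv)
      next
        case True
        define w where "w = snd j"
        have jw: "j = (idm, w)" using True by (cases j) (simp add: w_def)
        have wF: "w \<in> Finf" using jX by (cases j) (simp add: w_def Gsd_carrier)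
        show ?thesis
        proof (cases "w = (\<lambda>_. False)")
          case True
          then have "j = e" using jw e_eq by simp
          then have "mat z (hs D i \<otimes>\<^bsub>Gsd\<^esub> j \<otimes>\<^bsub>Gsd\<^esub> hs D i) \<one>\<^bsub>Gsd\<^esub> = 0" for i
            using cz_e hshh[of D i] hsX[of D i] by (simp add: e_def)
          then show ?thesis by (simp add: hsinv)
        next
          case w0: False
          show ?thesis
          proof (cases "w = v")
            case True
            then have "j = k" using jw by (simp add: k_def)
            then have "mat z (hs D i \<otimes>\<^bsub>Gsd\<^esub> j \<otimes>\<^bsub>Gsd\<^esub> hs D i) \<one>\<^bsub>Gsd\<^esub> = 0" for i
              using cz_k hsk[of D i] hsinv[of D i] by (simp add: e_def)
            then show ?thesis by (simp add: hsinv)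
          next
            case wv: False
            have rD: "r < D + Suc r" by simp
            have vD: "\<not> v t" if "t \<ge> D + Suc r" for t using bndv that D by simp
            have wD: "\<not> w t" if "t \<ge> D + Suc r" for t using bndS[OF jJ] that D by (simp add: w_def)
            have "inj (\<lambda>s. mvec (gblk v r (D + Suc r) s) w)"
              by (rule gblk_inj[OF rD r vD wD w0 wv])
            then have "inj (\<lambda>i. (idm, mvec (gm D i) w))" by (simp add: inj_def gm_def)
            then show ?thesis by (simp add: hsinv jw hsconj)
          qed
        qed
      qed
    qed
  qed
  have wc: "wot_closed (carrier Gsd) M" by (rule Mv(5))
  show ?thesis
    unfolding k_def[symmetric] uk_def[symmetric]
  proof (rule wc[unfolded wot_closed_def, rule_format, OF ukb])
    fix F :: "(((mat2 \<times> vec2) \<Rightarrow> complex) \<times> ((mat2 \<times> vec2) \<Rightarrow> complex)) set" and \<epsilon> :: real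
    assume F: "finite F" "F \<subseteq> l2 (carrier Gsd) \<times> l2 (carrier Gsd)" and e: "\<epsilon> > 0"
    define \<epsilon>' where "\<epsilon>' = \<epsilon> * cmod ck / 2"
    have e': "\<epsilon>' > 0" using e ck0' by (simp add: \<epsilon>'_def)
    define P where "P p n = (\<forall>D\<ge>n. \<forall>K\<ge>n.
        cmod (\<Sum>i<K. l2_inner (conjop Gsd (hs D i) z (fst p)) (snd p)) \<le> \<epsilon>' * real K)" for p n
    have ex: "\<exists>n. P p n" if p: "p \<in> F" for p
    proof -
      have fp: "fst p \<in> l2 (carrier Gsd)" and sp: "snd p \<in> l2 (carrier Gsd)" using p F(2) by auto
      show ?thesis unfolding P_def
        by (rule Gsd.avg_core[where hs=hs and A=z, OF zb ztoe hsX good fp sp e'])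
    qed
    have mono: "P p m" if "P p n" "n \<le> m" for p n m using that by (simp add: P_def)
    have "\<exists>n. \<forall>p\<in>F. P p n"
    proof (rule fin_max[where P=P])
      show "finite F" by (rule F(1))
    next
      fix p assume "p \<in> F" then show "\<exists>n. P p n" by (rule ex)
    next
      fix p n m assume "P p n" "n \<le> m" then show "P p m" by (rule mono)
    qed
    then obtain n where n: "\<forall>p\<in>F. P p n" by (elim exE)
    define D where "D = n"
    define K where "K = Suc n"
    have K0: "real K > 0" by (simp add: K_def)
    define S where "S = op_scale (1 / (of_nat K * ck)) (opsum (carrier Gsd) K (\<lambda>i. conjop Gsd (hs D i) y))"
    have SM: "S \<in> M" unfolding S_def
      by (rule Mv(4), rule opsum_in[OF M], rule conj_in_M[OF ginv hsX yM])
    have "\<forall>(f, g)\<in>F. cmod (l2_inner (\<lambda>x. uk f x - S f x) g) < \<epsilon>"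
    proof (clarify)
      fix f g assume fg: "(f, g) \<in> F"
      have f: "f \<in> l2 (carrier Gsd)" and g: "g \<in> l2 (carrier Gsd)" using fg F(2) by auto
      have Pfg: "cmod (\<Sum>i<K. l2_inner (conjop Gsd (hs D i) z f) g) \<le> \<epsilon>' * real K"
        using bspec[OF n fg, unfolded P_def, simplified, rule_format, of n "Suc n"]
        by (simp add: D_def K_def del: sum.lessThan_Suc)
      have conjy: "conjop Gsd (hs D i) y f = (\<lambda>w. conjop Gsd (hs D i) z f w + ck * uk f w)" for i
      proof -
        let ?h = "hs D i"
        have ih: "inv\<^bsub>Gsd\<^esub> ?h \<in> carrier Gsd" using hsX by simp
        define f' where "f' = lreg Gsd (inv\<^bsub>Gsd\<^esub> ?h) f"
        have f': "f' \<in> l2 (carrier Gsd)" unfolding f'_def using Gsd.lreg_l2[OF ih f] by blast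
        have zf: "z f' \<in> l2 (carrier Gsd)" by (rule bop_l2[OF zb f'])
        have uf: "uk f' \<in> l2 (carrier Gsd)" by (rule bop_l2[OF ukb f'])
        have ckuf: "(\<lambda>w. ck * uk f' w) \<in> l2 (carrier Gsd)" by (rule l2_scale[OF uf])
        have lb: "lreg Gsd ?h \<in> bop (carrier Gsd)" by (rule Gsd.lreg_bop[OF hsX])
        have "conjop Gsd ?h y f = lreg Gsd ?h (y f')" by (simp add: conjop_def f'_def)
        also have "y f' = (\<lambda>w. z f' w + ck * uk f' w)" by (rule ext) (rule yz)
        also have "lreg Gsd ?h (\<lambda>w. z f' w + ck * uk f' w)
            = (\<lambda>w. lreg Gsd ?h (z f') w + lreg Gsd ?h (\<lambda>w. ck * uk f' w) w)"
          by (rule bop_add[OF lb zf ckuf])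
        also have "lreg Gsd ?h (\<lambda>w. ck * uk f' w) = (\<lambda>w. ck * lreg Gsd ?h (uk f') w)"
          by (rule bop_scale[OF lb uf])
        also have "lreg Gsd ?h (uk f') = uk f"
        proof -
          have "lreg Gsd ?h (uk f') = (lreg Gsd ?h \<circ> lreg Gsd k \<circ> lreg Gsd (inv\<^bsub>Gsd\<^esub> ?h)) f"
            by (simp add: uk_def f'_def)
          also have "lreg Gsd ?h \<circ> lreg Gsd k \<circ> lreg Gsd (inv\<^bsub>Gsd\<^esub> ?h)
              = lreg Gsd (?h \<otimes>\<^bsub>Gsd\<^esub> k \<otimes>\<^bsub>Gsd\<^esub> inv\<^bsub>Gsd\<^esub> ?h)"
            using hsX kX ih by (simp add: Gsd.lreg_comp)
          also have "\<dots> = uk" by (simp add: hsk uk_def)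
          finally show ?thesis .
        qed
        also have "lreg Gsd ?h (z f') = conjop Gsd ?h z f" by (simp add: conjop_def f'_def)
        finally show ?thesis .
      qed
      have Sf: "S f = (\<lambda>w. (1 / (of_nat K * ck)) * (\<Sum>i<K. conjop Gsd (hs D i) z f w) + uk f w)"
      proof (rule ext)
        fix w
        have "S f w = (1 / (of_nat K * ck)) * (\<Sum>i<K. conjop Gsd (hs D i) z f w + ck * uk f w)"
          by (simp add: S_def op_scale_def opsum_apply conjy)
        also have "\<dots> = (1 / (of_nat K * ck)) * (\<Sum>i<K. conjop Gsd (hs D i) z f w)
            + (1 / (of_nat K * ck)) * (of_nat K * ck * uk f w)"
          by (simp add: sum.distrib distrib_left)
        also have "(1 / (of_nat K * ck)) * (of_nat K * ck * uk f w) = uk f w"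
          using ck0' K0 by (simp add: field_simps)
        finally show "S f w = (1 / (of_nat K * ck)) * (\<Sum>i<K. conjop Gsd (hs D i) z f w) + uk f w" .
      qed
      have Wl: "conjop Gsd (hs D i) z f \<in> l2 (carrier Gsd)" for i
        by (rule bop_l2[OF Gsd.conjop_bop[OF hsX zb] f])
      have "(\<lambda>w. uk f w - S f w) = (\<lambda>w. (- (1 / (of_nat K * ck))) * (\<Sum>i\<in>{..<K}. 1 * conjop Gsd (hs D i) z f w))"
        by (rule ext) (simp add: Sf)
      then have "l2_inner (\<lambda>w. uk f w - S f w) g
          = (- (1 / (of_nat K * ck))) * (\<Sum>i\<in>{..<K}. 1 * l2_inner (conjop Gsd (hs D i) z f) g)"
        by (simp only: inner_scale_left inner_sum_left[OF g finite_lessThan Wl])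
      then have "cmod (l2_inner (\<lambda>w. uk f w - S f w) g)
          = (1 / (real K * cmod ck)) * cmod (\<Sum>i<K. l2_inner (conjop Gsd (hs D i) z f) g)"
        by (simp add: norm_mult norm_divide)
      also have "\<dots> \<le> (1 / (real K * cmod ck)) * (\<epsilon>' * real K)"
        by (rule mult_left_mono[OF Pfg]) simp
      also have "\<dots> = \<epsilon> / 2" using K0 ck0' by (simp add: \<epsilon>'_def field_simps)
      also have "\<dots> < \<epsilon>" using e by simp
      finally show "cmod (l2_inner (\<lambda>w. uk f w - S f w) g) < \<epsilon>" .
    qed
    then show "\<exists>S\<in>M. \<forall>(f, g)\<in>F. cmod (l2_inner (\<lambda>x. uk f x - S f x) g) < \<epsilon>" using SM by blast
  qed
qed


lemma all_in_M:
  assumes M: "vNa (carrier Gsd) M" and ginv: "G_invariant Gsd M"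
    and ukM: "lreg Gsd (idm, v) \<in> M" and v: "v \<in> Finf" "v \<noteq> (\<lambda>_. False)"
  shows "\<forall>n\<in>Nsd. lreg Gsd n \<in> M"
proof
  fix n assume "n \<in> Nsd"
  then obtain w where n: "n = (idm, w)" and w: "w \<in> Finf" by (auto simp: Nsd_def)
  show "lreg Gsd n \<in> M"
  proof (cases "w = (\<lambda>_. False)")
    case True
    then have "n = \<one>\<^bsub>Gsd\<^esub>" using n by (simp add: Gsd_one)
    then show ?thesis using M by (simp add: Gsd.lreg_one vNa_def)
  next
    case False
    obtain g where g: "g \<in> GLinf" "mmul g g = idm" "mvec g v = w"
      using transitive_GL[OF v w False] by blast
    let ?h = "(g, (\<lambda>_::nat. False))"
    have hX: "?h \<in> carrier Gsd" by (rule invol_elem(1)[OF g(1,2)])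
    have hinv: "inv\<^bsub>Gsd\<^esub> ?h = ?h" by (rule invol_elem(2)[OF g(1,2)])
    have kX: "(idm, v) \<in> carrier Gsd" using v by (simp add: Gsd_carrier idm_GLinf)
    have "conjop Gsd ?h (lreg Gsd (idm, v)) \<in> M" by (rule conj_in_M[OF ginv hX ukM])
    moreover have "conjop Gsd ?h (lreg Gsd (idm, v)) = lreg Gsd (?h \<otimes>\<^bsub>Gsd\<^esub> (idm, v) \<otimes>\<^bsub>Gsd\<^esub> ?h)"
      unfolding conjop_def hinv using hX kX by (simp add: Gsd.lreg_comp)
    moreover have "?h \<otimes>\<^bsub>Gsd\<^esub> (idm, v) \<otimes>\<^bsub>Gsd\<^esub> ?h = n"
      using invol_elem(4)[OF g(1,2), of v] g(3) n by simp
    ultimately show ?thesis by simp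
  qed
qed

theorem proposition4p10:
  assumes "vNa (carrier Gsd) M"
    and "M \<subseteq> groupVN Gsd (carrier Gsd)"
    and "G_invariant Gsd M"
  shows "groupVN Gsd Nsd \<subseteq> M \<or> M \<inter> groupVN Gsd Nsd = scalars (carrier Gsd)"
proof (cases "\<forall>n\<in>Nsd. lreg Gsd n \<in> M")
  case True
  then have "lreg Gsd ` Nsd \<subseteq> M" by blast
  then have "groupVN Gsd Nsd \<subseteq> M" unfolding groupVN_def vN_gen_def using assms(1) by blast
  then show ?thesis by blast
next
  case False
  have sM: "scalars (carrier Gsd) \<subseteq> M"
    using assms(1) unfolding scalars_def vNa_def by blast
  have sL: "scalars (carrier Gsd) \<subseteq> groupVN Gsd Nsd"
    unfolding scalars_def groupVN_def vN_gen_def vNa_def by blast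
  have "M \<inter> groupVN Gsd Nsd \<subseteq> scalars (carrier Gsd)"
  proof
    fix x assume x: "x \<in> M \<inter> groupVN Gsd Nsd"
    show "x \<in> scalars (carrier Gsd)"
    proof (rule ccontr)
      assume ns: "x \<notin> scalars (carrier Gsd)"
      have xM: "x \<in> M" using x by blast
      have xC: "x \<in> Cset Gsd Rf" using x LN_Cset by blast
      obtain v where v: "v \<in> Finf" "v \<noteq> (\<lambda>_. False)" "mat x (idm, v) \<one>\<^bsub>Gsd\<^esub> \<noteq> 0"
        using find_k[OF xC ns] by blast
      have "lreg Gsd (idm, v) \<in> M" by (rule uk_in_M[OF assms(1) assms(3) xM xC v])
      then have "\<forall>n\<in>Nsd. lreg Gsd n \<in> M" by (rule all_in_M[OF assms(1) assms(3) _ v(1,2)])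
      then show False using False by blast
    qed
  qed
  then show ?thesis using sM sL by blast
qed


end
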